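(* Every 4-regular graph with girth 4 has a strong edge-coloring using at most 22 colors.
   Context: A strong edge-coloring of a graph is a proper edge-coloring in which, in addition, no two edges of the same color lie on a common path of length three. The girth of a graph is the length of its shortest cycle (a loop counts as a cycle of length 1 and a pair of parallel edges as a cycle of length 2). *)

theory Defs
  imports Main "HOL-Library.Extended_Nat"
begin

text \<open>A finite simple graph: finite vertex set V, edges are 2-element subsets of V.
  (Girth 4 excludes loops and parallel edges, so simple graphs suffice.)\<close>

definition simple_graph :: "'a set \<Rightarrow> 'a set set \<Rightarrow> bool" where
  "simple_graph V E \<longleftrightarrow> finite V \<and> (\<forall>e\<in>E. e \<subseteq> V \<and> card e = 2)"

definition degree :: "'a set set \<Rightarrow> 'a \<Rightarrow> nat" where
  "degree E v = card {e \<in> E. v \<in> e}"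

definition regular :: "'a set \<Rightarrow> 'a set set \<Rightarrow> nat \<Rightarrow> bool" where
  "regular V E d \<longleftrightarrow> (\<forall>v\<in>V. degree E v = d)"

definition has_cycle :: "'a set \<Rightarrow> 'a set set \<Rightarrow> nat \<Rightarrow> bool" where
  "has_cycle V E k \<longleftrightarrow> k \<ge> 3 \<and> (\<exists>xs. length xs = k \<and> distinct xs \<and> set xs \<subseteq> V \<and>
      (\<forall>i<k. {xs ! i, xs ! ((i + 1) mod k)} \<in> E))"

definition girth :: "'a set \<Rightarrow> 'a set set \<Rightarrow> enat" where
  "girth V E = (if \<exists>k. has_cycle V E k then enat (LEAST k. has_cycle V E k) else \<infinity>)"

definition on_common_path3 :: "'a set set \<Rightarrow> 'a set \<Rightarrow> 'a set \<Rightarrow> bool" where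
  "on_common_path3 E e f \<longleftrightarrow> (\<exists>u v w x. distinct [u, v, w, x] \<and>
      {u, v} \<in> E \<and> {v, w} \<in> E \<and> {w, x} \<in> E \<and>
      e \<in> {{u, v}, {v, w}, {w, x}} \<and> f \<in> {{u, v}, {v, w}, {w, x}})"

definition strong_edge_coloring :: "'a set set \<Rightarrow> ('a set \<Rightarrow> 'c) \<Rightarrow> bool" where
  "strong_edge_coloring E c \<longleftrightarrow>
     (\<forall>e\<in>E. \<forall>f\<in>E. e \<noteq> f \<and> e \<inter> f \<noteq> {} \<longrightarrow> c e \<noteq> c f) \<and>
     (\<forall>e\<in>E. \<forall>f\<in>E. e \<noteq> f \<and> on_common_path3 E e f \<longrightarrow> c e \<noteq> c f)"

end

theory Submission
  imports Defs
begin


lemma degen: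
  fixes X :: "'b set" and R :: "'b \<Rightarrow> 'b \<Rightarrow> bool" and key :: "'b \<Rightarrow> nat"
  assumes finX: "finite X"
    and bnd: "\<And>x. x \<in> X \<Longrightarrow> card {y \<in> X. R x y \<and> y \<noteq> x \<and> key x \<le> key y} \<le> k"
    and sym: "\<And>x y. R x y \<Longrightarrow> R y x"
  shows "\<exists>col. (\<forall>x\<in>X. col x \<le> k) \<and> (\<forall>x\<in>X. \<forall>y\<in>X. R x y \<and> x \<noteq> y \<longrightarrow> col x \<noteq> col y)"
proof -
  have main: "\<exists>col. (\<forall>x\<in>S. col x \<le> k) \<and> (\<forall>x\<in>S. \<forall>y\<in>S. R x y \<and> x \<noteq> y \<longrightarrow> col x \<noteq> col y)"
    if "S \<subseteq> X" for S
    using that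
  proof (induction "card S" arbitrary: S rule: less_induct)
    case less
    show ?case
    proof (cases "S = {}")
      case True then show ?thesis by auto
    next
      case False
      have fin: "finite S" using less.prems finX finite_subset by blast
      obtain x where x: "x \<in> S" "key x = Min (key ` S)"
      proof -
        have "Min (key ` S) \<in> key ` S" using Min_in[of "key ` S"] fin False by auto
        then show ?thesis using that by auto
      qed
      have xmin: "\<forall>y\<in>S. key x \<le> key y" using x fin by simp
      have "card (S - {x}) < card S" using fin x(1) by (meson card_Diff1_less)
      then obtain col where col: "\<forall>y\<in>S - {x}. col y \<le> k"
        "\<forall>y\<in>S - {x}. \<forall>z\<in>S - {x}. R y z \<and> y \<noteq> z \<longrightarrow> col y \<noteq> col z"
        using less.hyps[of "S - {x}"] less.prems by blast
      let ?Nx = "{y \<in> S - {x}. R x y}"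
      have sub: "?Nx \<subseteq> {y \<in> X. R x y \<and> y \<noteq> x \<and> key x \<le> key y}"
        using xmin less.prems by auto
      have "card ?Nx \<le> k"
      proof -
        have "finite {y \<in> X. R x y \<and> y \<noteq> x \<and> key x \<le> key y}" using finX by simp
        then have "card ?Nx \<le> card {y \<in> X. R x y \<and> y \<noteq> x \<and> key x \<le> key y}"
          using card_mono sub by blast
        also have "\<dots> \<le> k" using bnd x(1) less.prems by blast
        finally show ?thesis .
      qed
      then have cimg: "card (col ` ?Nx) \<le> k" using card_image_le[of ?Nx col] fin
        by simp
      have "\<exists>c\<le>k. c \<notin> col ` ?Nx"
      proof (rule ccontr)
        assume "\<not> ?thesis"
        then have "{0..k} \<subseteq> col ` ?Nx" by auto
        then have "card {0..k} \<le> card (col ` ?Nx)"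
          by (intro card_mono) (use fin in auto)
        then show False using cimg by simp
      qed
      then obtain c where c: "c \<le> k" "c \<notin> col ` ?Nx" by blast
      show ?thesis
      proof (intro exI[of _ "col(x := c)"] conjI ballI impI)
        fix y assume "y \<in> S" then show "(col(x := c)) y \<le> k" using col c by auto
      next
        fix y z assume yz: "y \<in> S" "z \<in> S" "R y z \<and> y \<noteq> z"
        show "(col(x := c)) y \<noteq> (col(x := c)) z"
        proof (cases "y = x")
          case True
          then show ?thesis using yz c by (auto simp: image_iff)
        next
          case False
          note yx = False
          show ?thesis
          proof (cases "z = x")
            case True
            then show ?thesis using yz c yx sym by (auto simp: image_iff)
          next
            case False
            then show ?thesis using yz yx col by auto
          qed
        qed
      qed
    qed
  qed
  show ?thesis using main[of X] by simp
qed



locale G4 =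
  fixes V :: "'a set" and E :: "'a set set"
  assumes sg: "simple_graph V E" and reg: "regular V E 4"
    and tf: "\<And>x y z. {x,y} \<in> E \<Longrightarrow> {y,z} \<in> E \<Longrightarrow> {x,z} \<in> E \<Longrightarrow> False"
begin

definition nb :: "'a \<Rightarrow> 'a set" where "nb v = {w. {v,w} \<in> E}"
definition star :: "'a \<Rightarrow> 'a set set" where "star v = {e \<in> E. v \<in> e}"
definition conf :: "'a set \<Rightarrow> 'a set \<Rightarrow> bool" where
  "conf e f \<longleftrightarrow> e \<noteq> f \<and> (e \<inter> f \<noteq> {} \<or> on_common_path3 E e f)"
definition Nc :: "'a set \<Rightarrow> 'a set set" where "Nc e = {f \<in> E. conf e f}"
definition Ms :: "'a \<Rightarrow> 'a \<Rightarrow> 'a set set" where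
  "Ms u v = {g \<in> E. \<exists>x y. g = {x,y} \<and> x \<in> nb u - {v} \<and> y \<in> nb v - {u}}"

lemma finV: "finite V" using sg by (simp add: simple_graph_def)

lemma edgeD: assumes "e \<in> E" shows "\<exists>x y. e = {x,y} \<and> x \<noteq> y \<and> x \<in> V \<and> y \<in> V"
proof -
  have "card e = 2" "e \<subseteq> V" using sg assms by (auto simp: simple_graph_def)
  then show ?thesis by (auto simp: card_2_iff)
qed

lemma adjD: assumes "{x,y} \<in> E" shows "x \<noteq> y" "x \<in> V" "y \<in> V"
proof -
  have "card {x,y} = 2" "{x,y} \<subseteq> V" using sg assms by (auto simp: simple_graph_def)
  then show "x \<noteq> y" "x \<in> V" "y \<in> V" by (auto split: if_splits)
qed

lemma finE: "finite E"
proof -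
  have "E \<subseteq> Pow V" using sg by (auto simp: simple_graph_def)
  then show ?thesis using finV finite_subset by blast
qed

lemma edge_fin: "e \<in> E \<Longrightarrow> finite e" using edgeD by fastforce

lemma nb_sym: "w \<in> nb v \<longleftrightarrow> v \<in> nb w" by (simp add: nb_def insert_commute)

lemma nb_iff: "w \<in> nb v \<longleftrightarrow> {v,w} \<in> E" by (simp add: nb_def)

lemma nb_V: "nb v \<subseteq> V" using adjD by (auto simp: nb_def)

lemma fin_nb: "finite (nb v)" using nb_V finV finite_subset by blast

lemma star_eq: "star v = (\<lambda>w. {v,w}) ` nb v"
proof
  show "star v \<subseteq> (\<lambda>w. {v,w}) ` nb v"
  proof
    fix e assume "e \<in> star v"
    then have e: "e \<in> E" "v \<in> e" by (auto simp: star_def)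
    then obtain x y where xy: "e = {x,y}" by (meson edgeD)
    then show "e \<in> (\<lambda>w. {v,w}) ` nb v" using e
      by (auto simp: nb_def image_iff insert_commute)
  qed
next
  show "(\<lambda>w. {v,w}) ` nb v \<subseteq> star v" by (auto simp: nb_def star_def)
qed

lemma inj_dbl: "inj_on (\<lambda>w. {v,w}) S" by (auto simp: inj_on_def doubleton_eq_iff)

lemma card_star_nb: "card (star v) = card (nb v)"
  using star_eq inj_dbl card_image by metis

lemma card_nb: assumes "v \<in> V" shows "card (nb v) = 4"
proof -
  have "degree E v = 4" using reg assms by (simp add: regular_def)
  then show ?thesis using card_star_nb by (simp add: degree_def star_def)
qed

lemma card_star: "v \<in> V \<Longrightarrow> card (star v) = 4" using card_nb card_star_nb by simp

lemma fin_star: "finite (star v)" using star_eq fin_nb by simp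

lemma nb_ext1: assumes "x \<in> nb v"
  shows "\<exists>b c d. nb v = {x,b,c,d} \<and> distinct [x,b,c,d]"
proof -
  have "v \<in> V" using assms adjD by (auto simp: nb_def)
  then have "card (nb v - {x}) = 3" using card_nb[of v] assms fin_nb by (simp add: card_Diff_singleton)
  then obtain b c d where bcd: "nb v - {x} = {b,c,d}" "b \<noteq> c" "c \<noteq> d" "b \<noteq> d"
    by (auto simp: card_3_iff)
  then have "nb v = {x,b,c,d}" using assms by auto
  moreover have "x \<notin> {b,c,d}" using bcd(1) by auto
  ultimately show ?thesis using bcd by auto
qed

lemma nb_ext2: assumes "x \<in> nb v" "y \<in> nb v" "x \<noteq> y"
  shows "\<exists>c d. nb v = {x,y,c,d} \<and> distinct [x,y,c,d]"
proof -
  obtain b c d where bcd: "nb v = {x,b,c,d}" "distinct [x,b,c,d]" using nb_ext1 assms(1) by blast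
  have "y = b \<or> y = c \<or> y = d" using assms bcd by auto
  then show ?thesis
  proof (elim disjE)
    assume "y = b" then show ?thesis using bcd by (intro exI[of _ c] exI[of _ d]) auto
  next
    assume "y = c" then show ?thesis using bcd by (intro exI[of _ b] exI[of _ d]) auto
  next
    assume "y = d" then show ?thesis using bcd by (intro exI[of _ b] exI[of _ c]) auto
  qed
qed

lemma nb_ext3: assumes "x \<in> nb v" "y \<in> nb v" "z \<in> nb v" "distinct [x,y,z]"
  shows "\<exists>d. nb v = {x,y,z,d} \<and> distinct [x,y,z,d]"
proof -
  obtain c d where cd: "nb v = {x,y,c,d}" "distinct [x,y,c,d]" using nb_ext2 assms by force
  have "z = c \<or> z = d" using assms cd by auto
  then show ?thesis
  proof (elim disjE)
    assume "z = c" then show ?thesis using cd by (intro exI[of _ d]) auto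
  next
    assume "z = d" then show ?thesis using cd by (intro exI[of _ c]) auto
  qed
qed

lemma conf_sym: "conf e f \<Longrightarrow> conf f e"
  unfolding conf_def on_common_path3_def by blast

lemma path_conf:
  assumes "distinct [u,v,w,x]" "{u,v} \<in> E" "{v,w} \<in> E" "{w,x} \<in> E"
  shows "conf {u,v} {w,x}"
proof -
  have "{u,v} \<noteq> {w,x}" using assms(1) by (auto simp: doubleton_eq_iff)
  moreover have "on_common_path3 E {u,v} {w,x}" unfolding on_common_path3_def
    by (rule exI[of _ u], rule exI[of _ v], rule exI[of _ w], rule exI[of _ x]) (use assms in simp)
  ultimately show ?thesis by (simp add: conf_def)
qed

lemma conf_cover:
  assumes "conf e f"
  shows "\<exists>x\<in>e. \<exists>y\<in>f. y = x \<or> {x,y} \<in> E"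
proof (cases "e \<inter> f = {}")
  case False then show ?thesis by blast
next
  case True
  then have "on_common_path3 E e f" using assms by (simp add: conf_def)
  then obtain u v w x where p: "{u,v} \<in> E" "{v,w} \<in> E" "{w,x} \<in> E"
    and e: "e = {u,v} \<or> e = {v,w} \<or> e = {w,x}" and f: "f = {u,v} \<or> f = {v,w} \<or> f = {w,x}"
    unfolding on_common_path3_def by blast
  have vw: "{w,v} \<in> E" using p by (simp add: insert_commute)
  from e f show ?thesis
  proof (elim disjE)
  qed (use p vw in blast)+
qed

lemma nonconf:
  assumes "e \<inter> f = {}" "\<And>x y. x \<in> e \<Longrightarrow> y \<in> f \<Longrightarrow> {x,y} \<notin> E"
  shows "\<not> conf e f"
  using conf_cover assms by blast

lemma star_minus_card: assumes "{u,w} \<in> E" shows "card (star w - {{u,w}}) = 3"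
proof -
  have "w \<in> V" using adjD assms by blast
  moreover have "{u,w} \<in> star w" using assms by (simp add: star_def)
  ultimately show ?thesis using card_star fin_star by (simp add: card_Diff_singleton)
qed

lemma card_side:
  assumes "{u,v} \<in> E"
  shows "card (star u \<union> (\<Union>w\<in>nb u - {v}. star w - {{u,w}})) \<le> 13"
proof -
  have u: "u \<in> V" using adjD assms by blast
  have v: "v \<in> nb u" using assms by (simp add: nb_def)
  have c3: "card (nb u - {v}) = 3" using card_nb[OF u] v fin_nb by (simp add: card_Diff_singleton)
  have "card (\<Union>w\<in>nb u - {v}. star w - {{u,w}}) \<le> (\<Sum>w\<in>nb u - {v}. card (star w - {{u,w}}))"
    by (rule card_UN_le) (simp add: fin_nb)
  also have "\<dots> = (\<Sum>w\<in>nb u - {v}. 3)"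
    by (rule sum.cong) (auto simp: nb_def intro: star_minus_card)
  also have "\<dots> = 9" using c3 by simp
  finally have "card (\<Union>w\<in>nb u - {v}. star w - {{u,w}}) \<le> 9" .
  moreover have "card (star u) = 4" using card_star u by simp
  ultimately show ?thesis using card_Un_le[of "star u" "(\<Union>w\<in>nb u - {v}. star w - {{u,w}})"] by linarith
qed

lemma fin_side: "finite (star u \<union> (\<Union>w\<in>nb u - {v}. star w - {{u,w}}))"
  using fin_star fin_nb by simp

lemma count_Nc:
  assumes uvE: "{u,v} \<in> E"
  shows "card (Nc {u,v}) + card (Ms u v) \<le> 24"
proof -
  have uv: "u \<noteq> v" using adjD uvE by blast
  define A where "A = star u \<union> (\<Union>w\<in>nb u - {v}. star w - {{u,w}})"
  define B where "B = star v \<union> (\<Union>w\<in>nb v - {u}. star w - {{v,w}})"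
  have vuE: "{v,u} \<in> E" using uvE by (simp add: insert_commute)
  have cA: "card A \<le> 13" unfolding A_def by (rule card_side[OF uvE])
  have cB: "card B \<le> 13" unfolding B_def by (rule card_side[OF vuE])
  have fA: "finite A" "finite B" unfolding A_def B_def by (rule fin_side)+
  have sideA: "f \<in> A" if "y \<in> nb u" "f \<in> star y" "y \<noteq> v" for f y
  proof (cases "f = {u,y}")
    case True
    then have "f \<in> star u" using that by (simp add: star_def)
    then show ?thesis unfolding A_def by blast
  next
    case False
    then have "f \<in> star y - {{u,y}}" "y \<in> nb u - {v}" using that by auto
    then show ?thesis unfolding A_def by blast
  qed
  have sideB: "f \<in> B" if "y \<in> nb v" "f \<in> star y" "y \<noteq> u" for f y
  proof (cases "f = {v,y}")
    case True
    then have "f \<in> star v" using that by (simp add: star_def)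
    then show ?thesis unfolding B_def by blast
  next
    case False
    then have "f \<in> star y - {{v,y}}" "y \<in> nb v - {u}" using that by auto
    then show ?thesis unfolding B_def by blast
  qed
  have NcAB: "insert {u,v} (Nc {u,v}) \<subseteq> A \<union> B"
  proof
    fix f assume "f \<in> insert {u,v} (Nc {u,v})"
    then consider "f = {u,v}" | "f \<in> E" "conf {u,v} f" by (auto simp: Nc_def)
    then show "f \<in> A \<union> B"
    proof cases
      case 1
      then have "f \<in> star u" using uvE by (simp add: star_def)
      then show ?thesis unfolding A_def by blast
    next
      case 2
      then obtain x y where xy: "x \<in> {u,v}" "y \<in> f" "y = x \<or> {x,y} \<in> E"
        using conf_cover by blast
      have fy: "f \<in> star y" using 2 xy by (simp add: star_def)
      show ?thesis
      proof (cases "y = u")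
        case True then show ?thesis using fy unfolding A_def by blast
      next
        case yu: False
        show ?thesis
        proof (cases "y = v")
          case True then show ?thesis using fy unfolding B_def by blast
        next
          case yv: False
          then have "{x,y} \<in> E" using xy yu by auto
          then have "(x = u \<and> y \<in> nb u) \<or> (x = v \<and> y \<in> nb v)" using xy(1) by (auto simp: nb_def)
          then show ?thesis using sideA sideB fy yu yv by blast
        qed
      qed
    qed
  qed
  have MAB: "insert {u,v} (Ms u v) \<subseteq> A \<inter> B"
  proof
    fix g assume "g \<in> insert {u,v} (Ms u v)"
    then consider "g = {u,v}" | x y where "g \<in> E" "g = {x,y}" "x \<in> nb u - {v}" "y \<in> nb v - {u}"
      by (auto simp: Ms_def)
    then show "g \<in> A \<inter> B"
    proof cases
      case 1
      then have "g \<in> star u" "g \<in> star v" using uvE by (auto simp: star_def)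
      then show ?thesis unfolding A_def B_def by blast
    next
      case 2
      have "g \<in> star x" "g \<in> star y" using 2 by (auto simp: star_def)
      then show ?thesis using sideA sideB 2 by blast
    qed
  qed
  have n1: "{u,v} \<notin> Nc {u,v}" by (simp add: Nc_def conf_def)
  have n2: "{u,v} \<notin> Ms u v"
  proof
    assume "{u,v} \<in> Ms u v"
    then obtain x y where xy: "{u,v} = {x,y}" "x \<in> nb u - {v}" "y \<in> nb v - {u}"
      unfolding Ms_def by blast
    have "{u,x} \<in> E" using xy(2) by (simp add: nb_def)
    then have "x \<noteq> u" using adjD(1) by blast
    then show False using xy(1,2) by (auto simp: doubleton_eq_iff)
  qed
  have fN: "finite (Nc {u,v})" "finite (Ms u v)" using finE by (auto simp: Nc_def Ms_def)
  have "card (insert {u,v} (Nc {u,v})) \<le> card (A \<union> B)"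
    using NcAB fA by (intro card_mono) auto
  then have i1: "card (Nc {u,v}) + 1 \<le> card (A \<union> B)" using n1 fN by simp
  have "card (insert {u,v} (Ms u v)) \<le> card (A \<inter> B)"
    using MAB fA by (intro card_mono) auto
  then have i2: "card (Ms u v) + 1 \<le> card (A \<inter> B)" using n2 fN by simp
  have "card (A \<union> B) + card (A \<inter> B) = card A + card B"
    using card_Un_Int[OF fA] by simp
  then show ?thesis using i1 i2 cA cB by linarith
qed

lemma card_quot:
  assumes "finite N" "G \<subseteq> N" "\<And>g. g \<in> G \<Longrightarrow> p g \<in> N - G \<and> p (p g) = p g"
  shows "card (p ` N) \<le> card N - card G"
proof -
  have "p ` N \<subseteq> p ` (N - G)"
  proof
    fix z assume "z \<in> p ` N"
    then obtain g where g: "g \<in> N" "z = p g" by blast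
    show "z \<in> p ` (N - G)"
    proof (cases "g \<in> G")
      case True then show ?thesis using assms(3)[of g] g by (metis image_eqI)
    next
      case False then show ?thesis using g by blast
    qed
  qed
  then have "card (p ` N) \<le> card (p ` (N - G))" using assms(1) by (intro card_mono) auto
  also have "\<dots> \<le> card (N - G)" using assms(1) by (intro card_image_le) auto
  also have "\<dots> = card N - card G" using assms(1,2) by (simp add: card_Diff_subset finite_subset)
  finally show ?thesis .
qed

end

context G4 begin

definition EK :: "'a set \<Rightarrow> 'a set set" where "EK K = {e \<in> E. e \<subseteq> K}"

lemma edge_in_K:
  assumes Kcl: "\<And>v w. v \<in> K \<Longrightarrow> {v,w} \<in> E \<Longrightarrow> w \<in> K"
    and "f \<in> E" "y \<in> f" "y \<in> K"
  shows "f \<subseteq> K"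
proof -
  obtain a b where ab: "f = {a,b}" "a \<noteq> b" using edgeD assms(2) by blast
  show ?thesis
  proof (cases "y = a")
    case True then show ?thesis using ab assms Kcl[of a b] by auto
  next
    case False then have "y = b" using ab assms by auto
    then show ?thesis using ab assms Kcl[of b a] by (auto simp: insert_commute)
  qed
qed

lemma Nc_EK:
  assumes Kcl: "\<And>v w. v \<in> K \<Longrightarrow> {v,w} \<in> E \<Longrightarrow> w \<in> K"
    and "e \<in> EK K"
  shows "Nc e \<subseteq> EK K"
proof
  fix f assume "f \<in> Nc e"
  then have f: "f \<in> E" "conf e f" by (auto simp: Nc_def)
  then obtain x y where xy: "x \<in> e" "y \<in> f" "y = x \<or> {x,y} \<in> E" using conf_cover by blast
  have "x \<in> K" using xy assms by (auto simp: EK_def)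
  then have "y \<in> K" using xy Kcl by auto
  then show "f \<in> EK K" using edge_in_K[OF Kcl f(1) xy(2)] f by (simp add: EK_def)
qed

lemma card_Nc_le: assumes "e \<in> E" shows "card (p ` Nc e) \<le> 24"
proof -
  obtain u v where "e = {u,v}" using edgeD assms by blast
  then have "card (Nc e) \<le> 24" using count_Nc assms by fastforce
  moreover have "finite (Nc e)" using finE by (simp add: Nc_def)
  ultimately show ?thesis using card_image_le le_trans by blast
qed

lemma excl_bound:
  assumes "finite T" "Z \<subseteq> T" "j \<le> card Z" "card T \<le> 21 + j" "\<And>z. z \<in> Z \<Longrightarrow> key z < (k::nat)"
  shows "card {y \<in> T. k \<le> key y} \<le> 21"
proof -
  have "{y \<in> T. k \<le> key y} \<subseteq> T - Z" using assms(5) by force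
  then have "card {y \<in> T. k \<le> key y} \<le> card (T - Z)" using assms(1) by (intro card_mono) auto
  also have "\<dots> = card T - card Z" using assms(1,2) by (simp add: card_Diff_subset finite_subset)
  finally show ?thesis using assms(3,4) by linarith
qed

lemma star_Mg_le1:
  assumes "\<And>e f. e \<in> Mg \<Longrightarrow> f \<in> Mg \<Longrightarrow> e \<noteq> f \<Longrightarrow> e \<inter> f = {}"
  shows "card (star u \<inter> Mg) \<le> 1"
proof -
  have "finite (star u \<inter> Mg)" using fin_star by simp
  moreover have "\<forall>a\<in>star u \<inter> Mg. \<forall>b\<in>star u \<inter> Mg. a = b"
    using assms by (auto simp: star_def)
  ultimately show ?thesis using card_le_Suc0_iff_eq by (metis One_nat_def)
qed

lemma star_conf:
  assumes "{a,b} \<in> E" "{u,a} \<in> E" "u \<noteq> b" "g \<in> star u"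
  shows "g \<in> Nc {a,b}"
proof -
  have ab: "a \<noteq> b" and ua: "u \<noteq> a" using adjD assms by auto
  obtain w where g: "g = {u,w}" "g \<in> E"
  proof -
    have "g \<in> E" "u \<in> g" using assms(4) by (auto simp: star_def)
    then obtain x y where "g = {x,y}" using edgeD by blast
    then show ?thesis using that \<open>g \<in> E\<close> \<open>u \<in> g\<close> by (auto simp: insert_commute)
  qed
  have wu: "w \<noteq> u" using adjD g by blast
  have "conf {a,b} g"
  proof (cases "w \<in> {a,b}")
    case True
    then have "g \<inter> {a,b} \<noteq> {}" using g by auto
    moreover have "g \<noteq> {a,b}" using g ua assms(3) by auto
    ultimately show ?thesis by (auto simp: conf_def)
  next
    case False
    have "conf {w,u} {a,b}"
      by (rule path_conf) (use False ab ua wu assms g in \<open>auto simp: insert_commute\<close>)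
    then show ?thesis using conf_sym g by (simp add: insert_commute)
  qed
  then show ?thesis using g by (simp add: Nc_def)
qed

lemma framework:
  fixes K :: "'a set" and lev :: "'a \<Rightarrow> nat" and Mg :: "'a set set" and rep :: "'a set \<Rightarrow> 'a set"
    and fa fb fc fd :: "'a set"
  assumes KV: "K \<subseteq> V" and Kcl: "\<And>v w. v \<in> K \<Longrightarrow> {v,w} \<in> E \<Longrightarrow> w \<in> K"
    and levd: "\<And>v. v \<in> K \<Longrightarrow> 0 < lev v \<Longrightarrow> \<exists>u. {u,v} \<in> E \<and> lev u < lev v"
    and Fin: "fa \<in> EK K" "fb \<in> EK K" "fc \<in> EK K" "fd \<in> EK K"
    and Fdist: "distinct [fa,fb,fc,fd]"
    and Fconf: "conf fa fb" "conf fa fc" "conf fa fd" "conf fb fc" "conf fb fd" "conf fc fd"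
    and lev0: "\<And>e. e \<in> EK K \<Longrightarrow> e \<notin> {fa,fb,fc,fd} \<Longrightarrow> e \<notin> Mg \<Longrightarrow> \<exists>x\<in>e. lev x = 0 \<Longrightarrow>
         3 \<le> card {f \<in> {fa,fb,fc,fd}. conf e f}"
    and Mg: "Mg \<subseteq> EK K" "Mg \<inter> {fa,fb,fc,fd} = {}" "card Mg \<le> 22"
      "\<And>e f. e \<in> Mg \<Longrightarrow> f \<in> Mg \<Longrightarrow> e \<noteq> f \<Longrightarrow> e \<inter> f = {}"
    and rep: "\<And>e. e \<notin> Mg \<Longrightarrow> rep e = e" "\<And>e. e \<in> Mg \<Longrightarrow> rep e \<in> Mg"
      "\<And>e f. e \<in> Mg \<Longrightarrow> f \<in> Mg \<Longrightarrow> rep e = rep f \<Longrightarrow> \<not> conf e f"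
    and c1: "card (rep ` Nc fa) \<le> 21" and c2: "card (rep ` Nc fb) \<le> 22"
    and c3: "card (rep ` Nc fc) \<le> 23"
  shows "\<exists>c. (\<forall>e\<in>EK K. c e < (22::nat)) \<and> (\<forall>e\<in>EK K. \<forall>f\<in>EK K. conf e f \<longrightarrow> c e \<noteq> c f)"
proof -
  define elev where "elev e = Min (lev ` e)" for e
  define BIG where "BIG = 5 + Max (lev ` K)"
  define key where "key x = (if x \<in> Mg then BIG else if x = fa then 0 else if x = fb then 1
      else if x = fc then 2 else if x = fd then (3::nat) else 4 + elev x)" for x
  define X where "X = rep ` EK K"
  define R where "R x y = (\<exists>e\<in>EK K. \<exists>f\<in>EK K. rep e = x \<and> rep f = y \<and> conf e f)" for x y
  have finK: "finite K" using KV finV finite_subset by blast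
  have finEK: "finite (EK K)" using finE by (simp add: EK_def)
  have finX: "finite X" using finEK by (simp add: X_def)
  have EKE: "e \<in> E" if "e \<in> EK K" for e using that by (simp add: EK_def)
  have elev_in: "\<exists>x\<in>e. lev x = elev e" if "e \<in> E" for e
  proof -
    have "finite e" "e \<noteq> {}" using edgeD that by fastforce+
    then have "Min (lev ` e) \<in> lev ` e" by simp
    then show ?thesis by (auto simp: elev_def)
  qed
  have elev_le: "elev e \<le> lev x" if "e \<in> E" "x \<in> e" for e x
  proof -
    have "finite e" using edgeD that by fastforce
    then show ?thesis using that by (simp add: elev_def)
  qed
  have elev_big: "4 + elev e < BIG" if eK: "e \<in> EK K" for e
  proof -
    obtain x where "x \<in> e" "lev x = elev e" using elev_in EKE eK by blast
    moreover have "x \<in> K" using eK calculation by (auto simp: EK_def)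
    ultimately have "elev e \<le> Max (lev ` K)" using finK by (metis Max_ge finite_imageI image_eqI)
    then show ?thesis by (simp add: BIG_def)
  qed
  have key_nonMg: "key y < BIG" if "y \<in> EK K" "y \<notin> Mg" for y
    using elev_big[OF that(1)] that by (simp add: key_def BIG_def)
  have Fnm: "fa \<notin> Mg" "fb \<notin> Mg" "fc \<notin> Mg" "fd \<notin> Mg" using Mg(2) by auto
  have repF: "rep fa = fa" "rep fb = fb" "rep fc = fc" "rep fd = fd" using Fnm rep(1) by auto
  have keyF: "key fa = 0" "key fb = 1" "key fc = 2" "key fd = 3"
    using Fnm Fdist by (auto simp: key_def)
  have symR: "R x y \<Longrightarrow> R y x" for x y unfolding R_def using conf_sym by blast
  have bnd: "card {y \<in> X. R x y \<and> y \<noteq> x \<and> key x \<le> key y} \<le> 21" if xX: "x \<in> X" for x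
  proof -
    obtain e where e: "e \<in> EK K" "x = rep e" using xX by (auto simp: X_def)
    show ?thesis
    proof (cases "x \<in> Mg")
      case True
      have "{y \<in> X. R x y \<and> y \<noteq> x \<and> key x \<le> key y} \<subseteq> Mg - {x}"
      proof
        fix y assume y: "y \<in> {y \<in> X. R x y \<and> y \<noteq> x \<and> key x \<le> key y}"
        obtain e' where e': "e' \<in> EK K" "y = rep e'" using y by (auto simp: X_def)
        show "y \<in> Mg - {x}"
        proof (rule ccontr)
          assume "y \<notin> Mg - {x}"
          then have "y \<notin> Mg" using y by auto
          then have "e' \<notin> Mg" using rep(2) e' by auto
          then have "y = e'" using rep(1) e' by auto
          then have "key y < BIG" using key_nonMg e' \<open>y \<notin> Mg\<close> by auto
          moreover have "key x = BIG" using True by (simp add: key_def)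
          ultimately show False using y by auto
        qed
      qed
      moreover have "finite Mg" using Mg(1) finEK finite_subset by blast
      ultimately have "card {y \<in> X. R x y \<and> y \<noteq> x \<and> key x \<le> key y} \<le> card (Mg - {x})"
        by (intro card_mono) auto
      also have "\<dots> \<le> 21" using Mg(3) True \<open>finite Mg\<close> by (simp add: card_Diff_singleton)
      finally show ?thesis .
    next
      case False
      have eMg: "e \<notin> Mg" using False e rep(2) by auto
      then have xe: "x = e" using e rep(1) by auto
      have eE: "e \<in> E" using e EKE by blast
      define T where "T = rep ` Nc e"
      have finT: "finite T" using finE by (simp add: T_def Nc_def)
      have T24: "card T \<le> 24" unfolding T_def using card_Nc_le eE by blast
      have sub: "{y \<in> X. R x y \<and> y \<noteq> x \<and> key x \<le> key y} \<subseteq> {y \<in> T. key e \<le> key y}"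
      proof
        fix y assume y: "y \<in> {y \<in> X. R x y \<and> y \<noteq> x \<and> key x \<le> key y}"
        then obtain e' f' where ef: "e' \<in> EK K" "f' \<in> EK K" "rep e' = x" "rep f' = y" "conf e' f'"
          by (auto simp: R_def)
        have "e' \<notin> Mg" using ef(3) False rep(2) by auto
        then have "e' = e" using ef(3) xe rep(1) by auto
        then have "f' \<in> Nc e" using ef EKE by (auto simp: Nc_def)
        then show "y \<in> {y \<in> T. key e \<le> key y}" using ef(4) y xe by (auto simp: T_def)
      qed
      have inT: "f \<in> T" if "f \<in> Nc e" "f \<notin> Mg" for f
        using that rep(1) unfolding T_def by (metis image_eqI)
      have "card {y \<in> T. key e \<le> key y} \<le> 21"
      proof (cases "e \<in> {fa,fb,fc,fd}")
        case True
        then consider "e = fa" | "e = fb" | "e = fc" | "e = fd" by auto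
        then show ?thesis
        proof cases
          case 1
          have "card T \<le> 21" using c1 1 by (simp add: T_def)
          then show ?thesis using finT by (intro excl_bound[of T "{}" 0]) auto
        next
          case 2
          have "fa \<in> Nc e" using 2 Fconf conf_sym Fin EKE by (auto simp: Nc_def)
          then have "{fa} \<subseteq> T" using inT Fnm by auto
          moreover have "card T \<le> 21 + 1" using c2 2 by (simp add: T_def)
          ultimately show ?thesis using finT keyF 2
            by (intro excl_bound[of T "{fa}" 1 key]) auto
        next
          case 3
          have "fa \<in> Nc e" "fb \<in> Nc e" using 3 Fconf conf_sym Fin EKE by (auto simp: Nc_def)
          then have "{fa,fb} \<subseteq> T" using inT Fnm by auto
          moreover have "card T \<le> 21 + 2" using c3 3 by (simp add: T_def)
          moreover have "card {fa,fb} = 2" using Fdist by simp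
          ultimately show ?thesis using finT keyF 3
            by (intro excl_bound[of T "{fa,fb}" 2 key]) auto
        next
          case 4
          have "fa \<in> Nc e" "fb \<in> Nc e" "fc \<in> Nc e" using 4 Fconf conf_sym Fin EKE by (auto simp: Nc_def)
          then have "{fa,fb,fc} \<subseteq> T" using inT Fnm by auto
          moreover have "card {fa,fb,fc} = 3" using Fdist by simp
          ultimately show ?thesis using finT keyF 4 T24
            by (intro excl_bound[of T "{fa,fb,fc}" 3 key]) auto
        qed
      next
        case nF: False
        have keye: "key e = 4 + elev e" using nF eMg by (auto simp: key_def)
        show ?thesis
        proof (cases "elev e = 0")
          case True
          then have "\<exists>x\<in>e. lev x = 0" using elev_in eE by metis
          then have c3F: "3 \<le> card {f \<in> {fa,fb,fc,fd}. conf e f}" using lev0 e(1) nF eMg by blast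
          have "{f \<in> {fa,fb,fc,fd}. conf e f} \<subseteq> T"
            using inT Fnm Fin EKE by (auto simp: Nc_def)
          moreover have "\<forall>z \<in> {f \<in> {fa,fb,fc,fd}. conf e f}. key z < key e"
            using keyF keye by auto
          ultimately show ?thesis using finT T24 c3F
            by (intro excl_bound[of T "{f \<in> {fa,fb,fc,fd}. conf e f}" 3 key]) auto
        next
          case False
          obtain a where a: "a \<in> e" "lev a = elev e" using elev_in eE by blast
          have aK: "a \<in> K" using a e by (auto simp: EK_def)
          obtain b where ab: "e = {a,b}"
          proof -
            obtain p q where "e = {p,q}" using edgeD eE by blast
            then show ?thesis using that a by (auto simp: insert_commute)
          qed
          obtain u where u: "{u,a} \<in> E" "lev u < lev a" using levd[OF aK] False a by auto
          have "lev a \<le> lev b" using elev_le[OF eE] a ab by auto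
          then have ub: "u \<noteq> b" using u by auto
          have ua: "u \<noteq> a" using u by auto
          have uK: "u \<in> K" using Kcl[OF aK, of u] u by (simp add: insert_commute)
          have uV: "u \<in> V" using uK KV by auto
          define Z where "Z = star u - Mg"
          have ZT: "Z \<subseteq> T"
          proof
            fix g assume "g \<in> Z"
            then have "g \<in> Nc e" "g \<notin> Mg" using star_conf[of a b u g] eE ab u ub by (auto simp: Z_def)
            then show "g \<in> T" using inT by blast
          qed
          have cZ: "3 \<le> card Z"
          proof -
            have "card (star u \<inter> Mg) \<le> 1" using star_Mg_le1 Mg(4) by blast
            moreover have "card (star u) = 4" using card_star uV by simp
            moreover have "card Z = card (star u) - card (star u \<inter> Mg)"
              unfolding Z_def using fin_star by (simp add: card_Diff_subset_Int)
            ultimately show ?thesis by linarith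
          qed
          have kZ: "key z < key e" if "z \<in> Z" for z
          proof -
            have z: "z \<in> E" "u \<in> z" "z \<notin> Mg" using that by (auto simp: Z_def star_def)
            have "elev z \<le> lev u" using elev_le z by blast
            then have "4 + elev z < 4 + elev e" using u a by linarith
            then show ?thesis using z keye by (auto simp: key_def)
          qed
          show ?thesis using finT T24 ZT cZ kZ
            by (intro excl_bound[of T Z 3 key]) auto
        qed
      qed
      moreover have "card {y \<in> X. R x y \<and> y \<noteq> x \<and> key x \<le> key y} \<le> card {y \<in> T. key e \<le> key y}"
        by (rule card_mono) (use finT sub in auto)
      ultimately show ?thesis by linarith
    qed
  qed
  obtain col :: "'a set \<Rightarrow> nat" where col: "\<forall>x\<in>X. col x \<le> 21"
      "\<forall>x\<in>X. \<forall>y\<in>X. R x y \<and> x \<noteq> y \<longrightarrow> col x \<noteq> col y"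
    using degen[of X R key 21, OF finX] bnd symR by blast
  show ?thesis
  proof (intro exI[of _ "\<lambda>e. col (rep e)"] conjI ballI impI)
    fix e assume "e \<in> EK K"
    then show "col (rep e) < 22" using col(1) by (auto simp: X_def less_Suc_eq_le)
  next
    fix e f assume ef: "e \<in> EK K" "f \<in> EK K" "conf e f"
    have Rr: "R (rep e) (rep f)" using ef by (auto simp: R_def)
    have "rep e \<noteq> rep f"
    proof
      assume eq: "rep e = rep f"
      show False
      proof (cases "e \<in> Mg")
        case True
        show False
        proof (cases "f \<in> Mg")
          case True then show False using rep(3) \<open>e \<in> Mg\<close> eq ef(3) by blast
        next
          case False then show False using rep(1,2) \<open>e \<in> Mg\<close> eq by metis
        qed
      next
        case False
        show False
        proof (cases "f \<in> Mg")
          case True then show False using rep(1,2) \<open>e \<notin> Mg\<close> eq by metis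
        next
          case fn: False then have "e = f" using rep(1) False eq by metis
          then show False using ef(3) by (simp add: conf_def)
        qed
      qed
    qed
    then show "col (rep e) \<noteq> col (rep f)" using col(2) Rr ef by (auto simp: X_def)
  qed
qed

definition Adj :: "('a \<times> 'a) set" where "Adj = {(x,y). {x,y} \<in> E}"
definition compo :: "'a \<Rightarrow> 'a set" where "compo r = {v. (r,v) \<in> Adj\<^sup>*}"

lemma Adj_sym: "(x,y) \<in> Adj \<longleftrightarrow> (y,x) \<in> Adj" by (simp add: Adj_def insert_commute)

lemma Adj_conv: "Adj\<inverse> = Adj" using Adj_sym by auto

lemma rtr_sym: "(x,y) \<in> Adj\<^sup>* \<Longrightarrow> (y,x) \<in> Adj\<^sup>*"
  by (metis Adj_conv rtrancl_converseI)

lemma comp_V: assumes "r \<in> V" shows "compo r \<subseteq> V"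
proof
  fix v assume "v \<in> compo r"
  then have "(r,v) \<in> Adj\<^sup>*" by (simp add: compo_def)
  then show "v \<in> V"
  proof (induction rule: rtrancl_induct)
    case base then show ?case using assms by simp
  next
    case (step y z) then show ?case using adjD by (auto simp: Adj_def)
  qed
qed

lemma comp_cl: "v \<in> compo r \<Longrightarrow> {v,w} \<in> E \<Longrightarrow> w \<in> compo r"
  unfolding compo_def Adj_def by (auto intro: rtrancl_into_rtrancl)

lemma comp_self: "r \<in> compo r" by (simp add: compo_def)

lemma lev_exists:
  assumes "\<And>v. v \<in> K \<Longrightarrow> \<exists>\<rho>\<in>R. (\<rho>,v) \<in> Adj\<^sup>*"
  shows "\<exists>lev::'a \<Rightarrow> nat. (\<forall>v\<in>K. 0 < lev v \<longrightarrow> (\<exists>u. {u,v} \<in> E \<and> lev u < lev v))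
           \<and> (\<forall>v\<in>K. lev v = 0 \<longrightarrow> v \<in> R)"
proof -
  define lev where "lev v = (LEAST n. \<exists>\<rho>\<in>R. (\<rho>,v) \<in> Adj ^^ n)" for v
  have ex: "\<exists>n. \<exists>\<rho>\<in>R. (\<rho>,v) \<in> Adj ^^ n" if "v \<in> K" for v
    using assms[OF that] by (auto simp: rtrancl_power)
  have levI: "\<exists>\<rho>\<in>R. (\<rho>,v) \<in> Adj ^^ (lev v)" if "v \<in> K" for v
    unfolding lev_def by (rule LeastI_ex[OF ex[OF that]])
  have levle: "lev v \<le> n" if "\<rho> \<in> R" "(\<rho>,v) \<in> Adj ^^ n" for v \<rho> n
    unfolding lev_def using that by (auto intro: Least_le)
  show ?thesis
  proof (intro exI[of _ lev] conjI ballI impI)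
    fix v assume v: "v \<in> K" "0 < lev v"
    then obtain m where m: "lev v = Suc m" by (metis gr0_implies_Suc)
    obtain \<rho> where "\<rho> \<in> R" "(\<rho>,v) \<in> Adj ^^ Suc m" using levI[OF v(1)] m by auto
    then obtain u where u: "(\<rho>,u) \<in> Adj ^^ m" "(u,v) \<in> Adj" \<open>\<rho> \<in> R\<close> by auto
    have "lev u \<le> m" using levle u by blast
    then show "\<exists>u. {u,v} \<in> E \<and> lev u < lev v" using u m by (auto simp: Adj_def)
  next
    fix v assume v: "v \<in> K" "lev v = 0"
    then show "v \<in> R" using levI[OF v(1)] by auto
  qed
qed

end


lemma pick1:
  assumes "distinct [s1,s2,s3]" "\<And>x y. x \<in> {s1,s2,s3} \<Longrightarrow> y \<in> {s1,s2,s3} \<Longrightarrow> P x \<Longrightarrow> P y \<Longrightarrow> x = y"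
  shows "\<exists>s\<in>{s1,s2,s3}. \<not> P s"
proof (rule ccontr)
  assume "\<not> ?thesis"
  then have "P s1" "P s2" by auto
  then show False using assms(2)[of s1 s2] assms(1) by auto
qed

lemma pick2:
  assumes "distinct [s1,s2,s3]" "\<And>x y. x \<in> {s1,s2,s3} \<Longrightarrow> y \<in> {s1,s2,s3} \<Longrightarrow> P x \<Longrightarrow> P y \<Longrightarrow> x = y"
    "\<And>x y. x \<in> {s1,s2,s3} \<Longrightarrow> y \<in> {s1,s2,s3} \<Longrightarrow> Q x \<Longrightarrow> Q y \<Longrightarrow> x = y"
  shows "\<exists>s\<in>{s1,s2,s3}. \<not> P s \<and> \<not> Q s"
proof (rule ccontr)
  assume "\<not> ?thesis"
  then have h: "P s1 \<or> Q s1" "P s2 \<or> Q s2" "P s3 \<or> Q s3" by auto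
  have d: "s1 \<noteq> s2" "s1 \<noteq> s3" "s2 \<noteq> s3" using assms(1) by auto
  show False
  proof (cases "P s1")
    case True
    then have "\<not> P s2" "\<not> P s3" using assms(2)[of s1 s2] assms(2)[of s1 s3] d by auto
    then have "Q s2" "Q s3" using h by auto
    then show False using assms(3)[of s2 s3] d by auto
  next
    case False
    then have "Q s1" using h by auto
    then have "\<not> Q s2" "\<not> Q s3" using assms(3)[of s1 s2] assms(3)[of s1 s3] d by auto
    then have "P s2" "P s3" using h by auto
    then show False using assms(2)[of s2 s3] d by auto
  qed
qed

lemma pick3:
  assumes "distinct [s1,s2,s3]" "\<And>x y. x \<in> {s1,s2,s3} \<Longrightarrow> y \<in> {s1,s2,s3} \<Longrightarrow> P x \<Longrightarrow> P y \<Longrightarrow> x = y"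
  shows "\<exists>s s'. s \<in> {s1,s2,s3} \<and> s' \<in> {s1,s2,s3} \<and> s \<noteq> s' \<and> \<not> P s \<and> \<not> P s'"
proof (cases "P s1")
  case True
  then have "\<not> P s2" "\<not> P s3" using assms(2)[of s1 s2] assms(2)[of s1 s3] assms(1) by auto
  then show ?thesis using assms(1) by (intro exI[of _ s2] exI[of _ s3]) auto
next
  case False
  show ?thesis
  proof (cases "P s2")
    case True
    then have "\<not> P s3" using assms(2)[of s2 s3] assms(1) by auto
    then show ?thesis using False assms(1) by (intro exI[of _ s1] exI[of _ s3]) auto
  next
    case f2: False
    then show ?thesis using False assms(1) by (intro exI[of _ s1] exI[of _ s2]) auto
  qed
qed

context G4 begin

lemma E_sym: "{x,y} \<in> E \<Longrightarrow> {y,x} \<in> E" by (simp add: insert_commute)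
lemma noloop: "{x,x} \<notin> E" using adjD(1) by blast
lemma conf_share: "e \<noteq> f \<Longrightarrow> x \<in> e \<Longrightarrow> x \<in> f \<Longrightarrow> conf e f" by (auto simp: conf_def)
lemma Nc_I: "f \<in> E \<Longrightarrow> conf e f \<Longrightarrow> f \<in> Nc e" by (simp add: Nc_def)

lemma nb_first: assumes "v \<in> V" shows "\<exists>x. x \<in> nb v"
proof -
  have "card (nb v) = 4" using card_nb assms by simp
  then have "nb v \<noteq> {}" by auto
  then show ?thesis by blast
qed

lemma final_bound:
  assumes "{u,v} \<in> E" "G \<subseteq> Nc {u,v}" "\<And>g. g \<in> G \<Longrightarrow> p g \<in> Nc {u,v} - G \<and> p (p g) = p g"
  shows "card (p ` Nc {u,v}) + card G + card (Ms u v) \<le> 24"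
proof -
  have fin: "finite (Nc {u,v})" using finE by (simp add: Nc_def)
  have "card (p ` Nc {u,v}) \<le> card (Nc {u,v}) - card G" by (rule card_quot[OF fin assms(2,3)])
  moreover have "card G \<le> card (Nc {u,v})" using card_mono[OF fin assms(2)] .
  moreover have "card (Nc {u,v}) + card (Ms u v) \<le> 24" by (rule count_Nc[OF assms(1)])
  ultimately show ?thesis by linarith
qed

lemma path_conf':
  assumes "distinct [u,v,w,x]" "{u,v} \<in> E" "{v,w} \<in> E" "{w,x} \<in> E"
  shows "{w,x} \<in> Nc {u,v}" "{u,v} \<in> Nc {w,x}"
  using path_conf[OF assms] conf_sym assms by (auto simp: Nc_def)

lemma caseB:
  assumes rV: "r \<in> V"
    and sq: "\<And>x y w w'. x \<in> compo r \<Longrightarrow> x \<noteq> y \<Longrightarrow> {x,w} \<in> E \<Longrightarrow> {y,w} \<in> E \<Longrightarrow> {x,w'} \<in> E \<Longrightarrow> {y,w'} \<in> E \<Longrightarrow> w = w'"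
  shows "\<exists>c. (\<forall>e\<in>EK (compo r). c e < (22::nat)) \<and> (\<forall>e\<in>EK (compo r). \<forall>f\<in>EK (compo r). conf e f \<longrightarrow> c e \<noteq> c f)"
proof -
  define K where "K = compo r"
  have KV: "K \<subseteq> V" using comp_V rV by (simp add: K_def)
  have Kcl: "w \<in> K" if "v \<in> K" "{v,w} \<in> E" for v w using that comp_cl by (simp add: K_def)
  have rK: "r \<in> K" by (simp add: K_def comp_self)
  have sqK: "w = w'" if "x \<in> K" "x \<noteq> y" "{x,w} \<in> E" "{y,w} \<in> E" "{x,w'} \<in> E" "{y,w'} \<in> E" for x y w w'
    using sq that by (simp add: K_def)
  have amo: "s = s'" if "v \<in> K" "v \<noteq> y" "s \<in> nb y" "s' \<in> nb y" "{v,s} \<in> E" "{v,s'} \<in> E" for v y s s'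
  proof -
    have "{y,s} \<in> E" "{y,s'} \<in> E" using that(3,4) by (auto simp: nb_def)
    then show ?thesis using sqK[OF that(1,2) that(5)] that(6) by blast
  qed
  have tri: "\<And>x y z. {x,y} \<in> E \<Longrightarrow> {y,z} \<in> E \<Longrightarrow> {x,z} \<in> E \<Longrightarrow> False" by (rule tf)
  obtain x1 where "x1 \<in> nb r" using nb_first rV by blast
  then obtain x2 x3 x4 where nbr: "nb r = {x1,x2,x3,x4}" "distinct [x1,x2,x3,x4]"
    using nb_ext1 by blast
  have rx1: "{r,x1} \<in> E" and rx2: "{r,x2} \<in> E" and rx3: "{r,x3} \<in> E" and rx4: "{r,x4} \<in> E"
    using nbr(1) by (auto simp: nb_def)
  have xK: "x1 \<in> K" "x2 \<in> K" "x3 \<in> K" "x4 \<in> K" using Kcl rK rx1 rx2 rx3 rx4 by auto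
  have xr: "x1 \<noteq> r" "x2 \<noteq> r" "x3 \<noteq> r" "x4 \<noteq> r" using rx1 rx2 rx3 rx4 adjD(1) by auto
  have nxx: "{xi,xj} \<notin> E" if "xi \<in> nb r" "xj \<in> nb r" for xi xj
  proof
    assume "{xi,xj} \<in> E"
    moreover have "{r,xi} \<in> E" "{r,xj} \<in> E" using that by (auto simp: nb_def)
    ultimately show False using tri[of r xi xj] by blast
  qed
  have "r \<in> nb x2" using rx2 by (simp add: nb_def insert_commute)
  then obtain y21 y22 y23 where n2: "nb x2 = {r,y21,y22,y23}" "distinct [r,y21,y22,y23]" using nb_ext1 by blast
  have "r \<in> nb x3" using rx3 by (simp add: nb_def insert_commute)
  then obtain y31 y32 y33 where n3: "nb x3 = {r,y31,y32,y33}" "distinct [r,y31,y32,y33]" using nb_ext1 by blast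
  have "r \<in> nb x4" using rx4 by (simp add: nb_def insert_commute)
  then obtain y41 y42 y43 where n4: "nb x4 = {r,y41,y42,y43}" "distinct [r,y41,y42,y43]" using nb_ext1 by blast
  have "r \<in> nb x1" using rx1 by (simp add: nb_def insert_commute)
  then obtain b1 b2 b3 where n1: "nb x1 = {r,b1,b2,b3}" "distinct [r,b1,b2,b3]" using nb_ext1 by blast
  have child: "{xj,a} \<notin> E \<and> a \<noteq> xj \<and> a \<noteq> r \<and> a \<in> K"
    if "xi \<in> nb r" "xj \<in> nb r" "xi \<noteq> xj" "a \<in> nb xi" "a \<noteq> r" for xi xj a
  proof -
    have xiK: "xi \<in> K" using that(1) Kcl rK by (auto simp: nb_def)
    have e1: "{xi,a} \<in> E" using that(4) by (simp add: nb_def)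
    have e2: "{xi,r} \<in> E" "{xj,r} \<in> E" using that(1,2) by (auto simp: nb_def insert_commute)
    have "{xj,a} \<notin> E"
    proof
      assume "{xj,a} \<in> E"
      then show False using sqK[OF xiK that(3) e2(1) e2(2) e1] that(5) by blast
    qed
    moreover have "a \<noteq> xj"
    proof
      assume "a = xj" then show False using e1 nxx[OF that(1,2)] by simp
    qed
    moreover have "a \<in> K" using Kcl[OF xiK e1] .
    ultimately show ?thesis using that(5) by blast
  qed
  have x1n: "x1 \<in> nb r" and x2n: "x2 \<in> nb r" and x3n: "x3 \<in> nb r" and x4n: "x4 \<in> nb r" using nbr(1) by auto
  have xd: "x1 \<noteq> x2" "x1 \<noteq> x3" "x1 \<noteq> x4" "x2 \<noteq> x3" "x2 \<noteq> x4" "x3 \<noteq> x4" using nbr(2) by auto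
  define a2 where "a2 = y21"
  have a2n: "a2 \<in> nb x2" "a2 \<noteq> r" using n2 by (auto simp: a2_def)
  have a2x3: "a2 \<noteq> x3" using child[OF x2n x3n xd(4) a2n] by blast
  have a2K: "a2 \<in> K" using child[OF x2n x3n xd(4) a2n] by blast
  have "\<exists>s\<in>{y31,y32,y33}. \<not> {a2,s} \<in> E"
  proof (rule pick1)
    show "distinct [y31,y32,y33]" using n3(2) by simp
    fix s s' assume "s \<in> {y31,y32,y33}" "s' \<in> {y31,y32,y33}" "{a2,s} \<in> E" "{a2,s'} \<in> E"
    moreover have "s \<in> nb x3" "s' \<in> nb x3" using calculation(1,2) n3(1) by auto
    ultimately show "s = s'" using amo[OF a2K a2x3] by blast
  qed
  then obtain a3 where a3: "a3 \<in> {y31,y32,y33}" "{a2,a3} \<notin> E" by blast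
  have a3n: "a3 \<in> nb x3" "a3 \<noteq> r" using a3 n3 by auto
  have a3K: "a3 \<in> K" using child[OF x3n x4n xd(6) a3n] by blast
  have a2x4: "a2 \<noteq> x4" using child[OF x2n x4n xd(5) a2n] by blast
  have a3x4: "a3 \<noteq> x4" using child[OF x3n x4n xd(6) a3n] by blast
  have "\<exists>s\<in>{y41,y42,y43}. \<not> {a2,s} \<in> E \<and> \<not> {a3,s} \<in> E"
  proof (rule pick2)
    show "distinct [y41,y42,y43]" using n4(2) by simp
  next
    fix s s' assume "s \<in> {y41,y42,y43}" "s' \<in> {y41,y42,y43}" "{a2,s} \<in> E" "{a2,s'} \<in> E"
    moreover have "s \<in> nb x4" "s' \<in> nb x4" using calculation(1,2) n4(1) by auto
    ultimately show "s = s'" using amo[OF a2K a2x4] by blast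
  next
    fix s s' assume "s \<in> {y41,y42,y43}" "s' \<in> {y41,y42,y43}" "{a3,s} \<in> E" "{a3,s'} \<in> E"
    moreover have "s \<in> nb x4" "s' \<in> nb x4" using calculation(1,2) n4(1) by auto
    ultimately show "s = s'" using amo[OF a3K a3x4] by blast
  qed
  then obtain a4 where a4: "a4 \<in> {y41,y42,y43}" "{a2,a4} \<notin> E" "{a3,a4} \<notin> E" by blast
  have a4n: "a4 \<in> nb x4" "a4 \<noteq> r" using a4 n4 by auto
  have a4K: "a4 \<in> K" using child[OF x4n x1n _ a4n] xd by blast
  have ch21: "{x1,a2} \<notin> E" "a2 \<noteq> x1" using child[OF x2n x1n _ a2n] xd by auto
  have ch23: "{x3,a2} \<notin> E" "a2 \<noteq> x3" using child[OF x2n x3n _ a2n] xd by auto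
  have ch24: "{x4,a2} \<notin> E" "a2 \<noteq> x4" using child[OF x2n x4n _ a2n] xd by auto
  have ch31: "{x1,a3} \<notin> E" "a3 \<noteq> x1" using child[OF x3n x1n _ a3n] xd by auto
  have ch32: "{x2,a3} \<notin> E" "a3 \<noteq> x2" using child[OF x3n x2n _ a3n] xd by auto
  have ch34: "{x4,a3} \<notin> E" "a3 \<noteq> x4" using child[OF x3n x4n _ a3n] xd by auto
  have ch41: "{x1,a4} \<notin> E" "a4 \<noteq> x1" using child[OF x4n x1n _ a4n] xd by auto
  have ch42: "{x2,a4} \<notin> E" "a4 \<noteq> x2" using child[OF x4n x2n _ a4n] xd by auto
  have ch43: "{x3,a4} \<notin> E" "a4 \<noteq> x3" using child[OF x4n x3n _ a4n] xd by auto
  have e2E: "{x2,a2} \<in> E" using a2n by (simp add: nb_def)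
  have e3E: "{x3,a3} \<in> E" using a3n by (simp add: nb_def)
  have e4E: "{x4,a4} \<in> E" using a4n by (simp add: nb_def)
  have ax: "a2 \<noteq> x2" "a3 \<noteq> x3" "a4 \<noteq> x4" using e2E e3E e4E adjD(1) by auto
  have ad: "a2 \<noteq> a3" "a2 \<noteq> a4" "a3 \<noteq> a4" using ch23 ch24 ch34 e3E e4E by auto
  define A where "A = {a2,a3,a4}"
  have Aprop: "a \<in> K \<and> a \<noteq> x1 \<and> {x1,a} \<notin> E" if "a \<in> A" for a
    using that a2K a3K a4K ch21 ch31 ch41 by (auto simp: A_def)
  define heavy where "heavy s \<longleftrightarrow> (\<exists>y z. y \<in> A \<and> z \<in> A \<and> y \<noteq> z \<and> {s,y} \<in> E \<and> {s,z} \<in> E)" for s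
  have "\<exists>s s'. s \<in> {b1,b2,b3} \<and> s' \<in> {b1,b2,b3} \<and> s \<noteq> s' \<and> \<not> heavy s \<and> \<not> heavy s'"
  proof (rule pick3)
    show "distinct [b1,b2,b3]" using n1(2) by simp
  next
    fix s s' assume ss: "s \<in> {b1,b2,b3}" "s' \<in> {b1,b2,b3}" "heavy s" "heavy s'"
    obtain y z where yz: "y \<in> A" "z \<in> A" "y \<noteq> z" "{s,y} \<in> E" "{s,z} \<in> E"
      using ss(3) by (auto simp: heavy_def)
    obtain y' z' where yz': "y' \<in> A" "z' \<in> A" "y' \<noteq> z'" "{s',y'} \<in> E" "{s',z'} \<in> E"
      using ss(4) by (auto simp: heavy_def)
    have "y = y' \<or> y = z' \<or> z = y' \<or> z = z'"
      using yz(1,2,3) yz'(1,2,3) unfolding A_def by blast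
    then obtain a where a: "a \<in> A" "{s,a} \<in> E" "{s',a} \<in> E" using yz yz' by blast
    have sn: "s \<in> nb x1" "s' \<in> nb x1" using ss(1,2) n1(1) by auto
    show "s = s'" using amo[of a x1 s s'] Aprop[OF a(1)] sn a(2,3) E_sym by blast
  qed
  then obtain b b' where bb: "b \<in> {b1,b2,b3}" "b' \<in> {b1,b2,b3}" "b \<noteq> b'" "\<not> heavy b" "\<not> heavy b'"
    by blast
  have bn: "b \<in> nb x1" "b \<noteq> r" using bb(1) n1 by auto
  have b'n: "b' \<in> nb x1" "b' \<noteq> r" using bb(2) n1 by auto
  have bE: "{x1,b} \<in> E" "{x1,b'} \<in> E" using bn b'n by (auto simp: nb_def)
  have bK: "b \<in> K" "b' \<in> K" using Kcl xK(1) bE by auto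
  have cb2: "{x2,b} \<notin> E" "b \<noteq> x2" "{x2,b'} \<notin> E" "b' \<noteq> x2"
    using child[OF x1n x2n _ bn] child[OF x1n x2n _ b'n] xd by auto
  have cb3: "{x3,b} \<notin> E" "b \<noteq> x3" "{x3,b'} \<notin> E" "b' \<noteq> x3"
    using child[OF x1n x3n _ bn] child[OF x1n x3n _ b'n] xd by auto
  have cb4: "{x4,b} \<notin> E" "b \<noteq> x4" "{x4,b'} \<notin> E" "b' \<noteq> x4"
    using child[OF x1n x4n _ bn] child[OF x1n x4n _ b'n] xd by auto
  have bx1: "b \<noteq> x1" "b' \<noteq> x1" using bE adjD(1) by auto
  have bA: "b \<notin> A" "b' \<notin> A" using Aprop bE by auto
  have bb'E: "{b,b'} \<notin> E" using tri[of x1 b b'] bE by blast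
  have "x1 \<in> nb b" using bE by (simp add: nb_def insert_commute)
  then obtain w1 w2 w3 where nbb: "nb b = {x1,w1,w2,w3}" "distinct [x1,w1,w2,w3]" using nb_ext1 by blast
  have "x1 \<in> nb b'" using bE by (simp add: nb_def insert_commute)
  then obtain v1 v2 v3 where nbb': "nb b' = {x1,v1,v2,v3}" "distinct [x1,v1,v2,v3]" using nb_ext1 by blast
  have light: "s = s'" if "\<not> heavy c" "s \<in> A" "s' \<in> A" "s \<in> nb c" "s' \<in> nb c" for c s s'
  proof (rule ccontr)
    assume "s \<noteq> s'"
    then have "heavy c" using that(2-5) unfolding heavy_def nb_def by blast
    then show False using that(1) by blast
  qed
  have "\<exists>s\<in>{w1,w2,w3}. \<not> s \<in> A"
  proof (rule pick1)
    show "distinct [w1,w2,w3]" using nbb(2) by simp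
  next
    fix s s' assume "s \<in> {w1,w2,w3}" "s' \<in> {w1,w2,w3}" "s \<in> A" "s' \<in> A"
    moreover have "s \<in> nb b" "s' \<in> nb b" using calculation(1,2) nbb(1) by auto
    ultimately show "s = s'" using light[OF bb(4)] by blast
  qed
  then obtain w where w: "w \<in> {w1,w2,w3}" "w \<notin> A" by blast
  have wn: "w \<in> nb b" "w \<noteq> x1" using w nbb by auto
  have wE: "{b,w} \<in> E" using wn by (simp add: nb_def)
  have wK: "w \<in> K" using Kcl[OF bK(1) wE] .
  have wb': "w \<noteq> b'"
  proof
    assume "w = b'" then show False using wE bb'E by simp
  qed
  have "\<exists>s\<in>{v1,v2,v3}. \<not> s \<in> A \<and> \<not> {w,s} \<in> E"
  proof (rule pick2)
    show "distinct [v1,v2,v3]" using nbb'(2) by simp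
  next
    fix s s' assume "s \<in> {v1,v2,v3}" "s' \<in> {v1,v2,v3}" "s \<in> A" "s' \<in> A"
    moreover have "s \<in> nb b'" "s' \<in> nb b'" using calculation(1,2) nbb'(1) by auto
    ultimately show "s = s'" using light[OF bb(5)] by blast
  next
    fix s s' assume "s \<in> {v1,v2,v3}" "s' \<in> {v1,v2,v3}" "{w,s} \<in> E" "{w,s'} \<in> E"
    moreover have "s \<in> nb b'" "s' \<in> nb b'" using calculation(1,2) nbb'(1) by auto
    ultimately show "s = s'" using amo[OF wK wb'] by blast
  qed
  then obtain w' where w': "w' \<in> {v1,v2,v3}" "w' \<notin> A" "{w,w'} \<notin> E" by blast
  have w'n: "w' \<in> nb b'" "w' \<noteq> x1" using w' nbb' by auto
  have w'E: "{b',w'} \<in> E" using w'n by (simp add: nb_def)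
  have w'K: "w' \<in> K" using Kcl[OF bK(2) w'E] .
  have bbd: "b \<noteq> b'" using bb(3) .
  have bw'E: "{b,w'} \<notin> E"
  proof
    assume h: "{b,w'} \<in> E"
    have "x1 = w'" using sqK[OF bK(1) bbd _ _ h w'E] bE E_sym by blast
    then show False using w'n by simp
  qed
  have wb'E: "{w,b'} \<notin> E"
  proof
    assume h: "{w,b'} \<in> E"
    have "x1 = w" using sqK[OF bK(1) bbd _ _ wE] h bE E_sym by blast
    then show False using wn by simp
  qed
  have ww': "w \<noteq> w'" using wb'E w'E by (auto simp: insert_commute)
  have w'b: "w' \<noteq> b" using w'E bb'E by (auto simp: insert_commute)
  have bw: "b \<noteq> w" "b' \<noteq> w'" using wE w'E adjD(1) by auto
  have wr: "w \<noteq> r" "w' \<noteq> r"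
  proof -
    show "w \<noteq> r"
    proof
      assume "w = r" then have "b \<in> nb r" using wE by (simp add: nb_def insert_commute)
      then show False using nbr(1) bx1 cb2 cb3 cb4 by auto
    qed
    show "w' \<noteq> r"
    proof
      assume "w' = r" then have "b' \<in> nb r" using w'E by (simp add: nb_def insert_commute)
      then show False using nbr(1) bx1 cb2 cb3 cb4 by auto
    qed
  qed
  have wx: "w \<noteq> x2" "w \<noteq> x3" "w \<noteq> x4" "w' \<noteq> x2" "w' \<noteq> x3" "w' \<noteq> x4"
    using wE w'E cb2 cb3 cb4 by (auto simp: insert_commute)
  have wA: "w \<noteq> a2" "w \<noteq> a3" "w \<noteq> a4" "w' \<noteq> a2" "w' \<noteq> a3" "w' \<noteq> a4"
    using w(2) w'(2) by (auto simp: A_def)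
  have bAx: "b \<noteq> a2" "b \<noteq> a3" "b \<noteq> a4" "b' \<noteq> a2" "b' \<noteq> a3" "b' \<noteq> a4"
    using bA by (auto simp: A_def)
  have dist10: "distinct [x2,a2,x3,a3,x4,a4,b,w,b',w']"
    using xd ax ad ch23 ch24 ch32 ch34 ch42 ch43 cb2 cb3 cb4 wx wA bAx bbd bw ww' w'b wb'
    by auto
  obtain lev :: "'a \<Rightarrow> nat" where lev: "\<forall>v\<in>K. 0 < lev v \<longrightarrow> (\<exists>u. {u,v} \<in> E \<and> lev u < lev v)"
      "\<forall>v\<in>K. lev v = 0 \<longrightarrow> v \<in> {r}"
  proof -
    have "\<exists>\<rho>\<in>{r}. (\<rho>,v) \<in> Adj\<^sup>*" if "v \<in> K" for v using that by (simp add: K_def compo_def)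
    then show ?thesis using lev_exists[of K "{r}"] that by blast
  qed
  define f1 where "f1 = {r,x1}"
  define f2 where "f2 = {r,x2}"
  define f3 where "f3 = {r,x3}"
  define f4 where "f4 = {r,x4}"
  define m2 where "m2 = {x2,a2}"
  define m3 where "m3 = {x3,a3}"
  define m4 where "m4 = {x4,a4}"
  define p where "p = {b,w}"
  define p' where "p' = {b',w'}"
  define Mg where "Mg = {m2,m3,m4,p,p'}"
  define rep where "rep e = (if e = m3 \<or> e = m4 then m2 else if e = p' then p else e)" for e
  have i1: "m2 \<inter> m3 = {}" "m2 \<inter> m4 = {}" "m2 \<inter> p = {}" "m2 \<inter> p' = {}" "m3 \<inter> m4 = {}"
    "m3 \<inter> p = {}" "m3 \<inter> p' = {}" "m4 \<inter> p = {}" "m4 \<inter> p' = {}" "p \<inter> p' = {}"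
    using dist10 by (auto simp: m2_def m3_def m4_def p_def p'_def)
  have ne: "m2 \<noteq> {}" "m3 \<noteq> {}" "m4 \<noteq> {}" "p \<noteq> {}" "p' \<noteq> {}"
    by (auto simp: m2_def m3_def m4_def p_def p'_def)
  have nq: "m2 \<noteq> m3" "m2 \<noteq> m4" "m2 \<noteq> p" "m2 \<noteq> p'" "m3 \<noteq> m4" "m3 \<noteq> p" "m3 \<noteq> p'"
    "m4 \<noteq> p" "m4 \<noteq> p'" "p \<noteq> p'"
    using i1 ne by auto
  have rep_simps: "rep m2 = m2" "rep m3 = m2" "rep m4 = m2" "rep p = p" "rep p' = p"
    using nq by (auto simp: rep_def)
  have mE: "m2 \<in> E" "m3 \<in> E" "m4 \<in> E" "p \<in> E" "p' \<in> E"
    using e2E e3E e4E wE w'E by (auto simp: m2_def m3_def m4_def p_def p'_def)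
  have fE: "f1 \<in> E" "f2 \<in> E" "f3 \<in> E" "f4 \<in> E" using rx1 rx2 rx3 rx4 by (auto simp: f1_def f2_def f3_def f4_def)
  have nc_path: "{w0,x0} \<in> Nc {v0,u0}"
    if "distinct [u0,v0,w0,x0]" "{u0,v0} \<in> E" "{v0,w0} \<in> E" "{w0,x0} \<in> E" for u0 v0 w0 x0
    using path_conf'(1)[OF that] by (simp add: insert_commute)
  have share: "g \<in> Nc f" if "g \<in> E" "f \<noteq> g" "z \<in> f" "z \<in> g" for f g z
    using conf_share[OF that(2-4)] that(1) by (simp add: Nc_def)
  have dx: "distinct [x1,r,x2,a2]" "distinct [x1,r,x3,a3]" "distinct [x1,r,x4,a4]"
    "distinct [x2,r,x3,a3]" "distinct [x2,r,x4,a4]" "distinct [x3,r,x2,a2]" "distinct [x3,r,x4,a4]"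
    using xd xr a2n a3n a4n ax ch21 ch23 ch24 ch31 ch32 ch34 ch41 ch42 ch43 by auto
  have rxE: "{x1,r} \<in> E" "{x2,r} \<in> E" "{x3,r} \<in> E" "{x4,r} \<in> E" using rx1 rx2 rx3 rx4 E_sym by auto
  have N1: "m2 \<in> Nc f1" "m3 \<in> Nc f1" "m4 \<in> Nc f1"
    using nc_path[OF dx(1) rxE(1) rx2 e2E] nc_path[OF dx(2) rxE(1) rx3 e3E] nc_path[OF dx(3) rxE(1) rx4 e4E]
    by (simp_all add: f1_def m2_def m3_def m4_def)
  have dp: "distinct [r,x1,b,w]" "distinct [r,x1,b',w']" using xr bn b'n bx1 bw wr wn w'n by auto
  have N1p: "p \<in> Nc f1" "p' \<in> Nc f1"
    using path_conf'(1)[OF dp(1) rx1 bE(1) wE] path_conf'(1)[OF dp(2) rx1 bE(2) w'E]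
    by (simp_all add: f1_def p_def p'_def)
  have N2: "m2 \<in> Nc f2" "m3 \<in> Nc f2" "m4 \<in> Nc f2"
  proof -
    show "m2 \<in> Nc f2" using share[of m2 f2 x2] mE a2n by (auto simp: f2_def m2_def doubleton_eq_iff)
    show "m3 \<in> Nc f2" using nc_path[OF dx(4) rxE(2) rx3 e3E] by (simp add: f2_def m3_def)
    show "m4 \<in> Nc f2" using nc_path[OF dx(5) rxE(2) rx4 e4E] by (simp add: f2_def m4_def)
  qed
  have N3: "m2 \<in> Nc f3" "m3 \<in> Nc f3" "m4 \<in> Nc f3"
  proof -
    show "m3 \<in> Nc f3" using share[of m3 f3 x3] mE a3n by (auto simp: f3_def m3_def doubleton_eq_iff)
    show "m2 \<in> Nc f3" using nc_path[OF dx(6) rxE(3) rx2 e2E] by (simp add: f3_def m2_def)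
    show "m4 \<in> Nc f3" using nc_path[OF dx(7) rxE(3) rx4 e4E] by (simp add: f3_def m4_def)
  qed
  have cb1: "card (rep ` Nc f1) \<le> 21"
  proof -
    have "card (rep ` Nc {r,x1}) + card {m3,m4,p'} + card (Ms r x1) \<le> 24"
    proof (rule final_bound[OF rx1])
      show "{m3,m4,p'} \<subseteq> Nc {r,x1}" using N1 N1p by (simp add: f1_def)
      fix g assume "g \<in> {m3,m4,p'}"
      then consider "g = m3" | "g = m4" | "g = p'" by blast
      then show "rep g \<in> Nc {r, x1} - {m3,m4,p'} \<and> rep (rep g) = rep g"
      proof cases
        case 1 then show ?thesis using rep_simps(1,2) N1(1) nq(1,2,4) unfolding f1_def by simp
      next
        case 2 then show ?thesis using rep_simps(1,3) N1(1) nq(1,2,4) unfolding f1_def by simp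
      next
        case 3 then show ?thesis using rep_simps(4,5) N1p(1) nq(6,8,10) unfolding f1_def by simp
      qed
    qed
    moreover have "card {m3,m4,p'} = 3" using nq by simp
    ultimately show ?thesis by (simp add: f1_def)
  qed
  have cb2: "card (rep ` Nc f2) \<le> 22"
  proof -
    have "card (rep ` Nc {r,x2}) + card {m3,m4} + card (Ms r x2) \<le> 24"
    proof (rule final_bound[OF rx2])
      show "{m3,m4} \<subseteq> Nc {r,x2}" using N2 by (simp add: f2_def)
      fix g assume "g \<in> {m3,m4}"
      then consider "g = m3" | "g = m4" by blast
      then show "rep g \<in> Nc {r, x2} - {m3,m4} \<and> rep (rep g) = rep g"
      proof cases
        case 1 then show ?thesis using rep_simps(1,2) N2(1) nq(1,2) unfolding f2_def by simp
      next
        case 2 then show ?thesis using rep_simps(1,3) N2(1) nq(1,2) unfolding f2_def by simp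
      qed
    qed
    moreover have "card {m3,m4} = 2" using nq by simp
    ultimately show ?thesis by (simp add: f2_def)
  qed
  have cb3: "card (rep ` Nc f3) \<le> 23"
  proof -
    have "card (rep ` Nc {r,x3}) + card {m3,m4} + card (Ms r x3) \<le> 24"
    proof (rule final_bound[OF rx3])
      show "{m3,m4} \<subseteq> Nc {r,x3}" using N3 by (simp add: f3_def)
      fix g assume "g \<in> {m3,m4}"
      then consider "g = m3" | "g = m4" by blast
      then show "rep g \<in> Nc {r, x3} - {m3,m4} \<and> rep (rep g) = rep g"
      proof cases
        case 1 then show ?thesis using rep_simps(1,2) N3(1) nq(1,2) unfolding f3_def by simp
      next
        case 2 then show ?thesis using rep_simps(1,3) N3(1) nq(1,2) unfolding f3_def by simp
      qed
    qed
    moreover have "card {m3,m4} = 2" using nq by simp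
    ultimately show ?thesis by (simp add: f3_def)
  qed
  have nc23: "\<not> conf m2 m3"
    by (unfold m2_def m3_def, rule nonconf) (use dist10 nxx[OF x2n x3n] ch32 ch23 a3 in \<open>auto simp: insert_commute\<close>)
  have nc24: "\<not> conf m2 m4"
    by (unfold m2_def m4_def, rule nonconf) (use dist10 nxx[OF x2n x4n] ch42 ch24 a4 in \<open>auto simp: insert_commute\<close>)
  have nc34: "\<not> conf m3 m4"
    by (unfold m3_def m4_def, rule nonconf) (use dist10 nxx[OF x3n x4n] ch43 ch34 a4 in \<open>auto simp: insert_commute\<close>)
  have ncp: "\<not> conf p p'"
    by (unfold p_def p'_def, rule nonconf) (use dist10 bb'E bw'E wb'E w' in \<open>auto simp: insert_commute\<close>)
  have main: "\<exists>c. (\<forall>e\<in>EK K. c e < (22::nat)) \<and> (\<forall>e\<in>EK K. \<forall>f\<in>EK K. conf e f \<longrightarrow> c e \<noteq> c f)"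
    apply (rule framework[where K=K and lev=lev and Mg=Mg and rep=rep and fa=f1 and fb=f2 and fc=f3 and fd=f4])
    subgoal by (rule KV)
    subgoal by (rule Kcl)
    subgoal using lev(1) by blast
    subgoal using rx1 rK xK by (simp add: EK_def f1_def)
    subgoal using rx2 rK xK by (simp add: EK_def f2_def)
    subgoal using rx3 rK xK by (simp add: EK_def f3_def)
    subgoal using rx4 rK xK by (simp add: EK_def f4_def)
    subgoal using xd by (auto simp: f1_def f2_def f3_def f4_def doubleton_eq_iff)
    subgoal using xd by (intro conf_share[of _ _ r]) (auto simp: f1_def f2_def f3_def f4_def doubleton_eq_iff)
    subgoal using xd by (intro conf_share[of _ _ r]) (auto simp: f1_def f2_def f3_def f4_def doubleton_eq_iff)
    subgoal using xd by (intro conf_share[of _ _ r]) (auto simp: f1_def f2_def f3_def f4_def doubleton_eq_iff)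
    subgoal using xd by (intro conf_share[of _ _ r]) (auto simp: f1_def f2_def f3_def f4_def doubleton_eq_iff)
    subgoal using xd by (intro conf_share[of _ _ r]) (auto simp: f1_def f2_def f3_def f4_def doubleton_eq_iff)
    subgoal using xd by (intro conf_share[of _ _ r]) (auto simp: f1_def f2_def f3_def f4_def doubleton_eq_iff)
    subgoal for e
    proof -
      assume h: "e \<in> EK K" "e \<notin> {f1,f2,f3,f4}" "e \<notin> Mg" "\<exists>x\<in>e. lev x = 0"
      then obtain x where x: "x \<in> e" "lev x = 0" by blast
      have "x \<in> K" using h(1) x(1) by (auto simp: EK_def)
      then have xr: "x = r" using lev(2) x(2) by blast
      have eE: "e \<in> E" using h(1) by (simp add: EK_def)
      obtain a0 b0 where ab0: "e = {a0,b0}" using edgeD eE by blast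
      have "\<exists>y. e = {r,y}"
      proof (cases "a0 = r")
        case True then show ?thesis using ab0 by blast
      next
        case False then have "b0 = r" using ab0 x(1) xr by auto
        then show ?thesis using ab0 by (auto simp: insert_commute)
      qed
      then obtain y where ey: "e = {r,y}" by blast
      then have "y \<in> nb r" using eE by (simp add: nb_def)
      then have "y = x1 \<or> y = x2 \<or> y = x3 \<or> y = x4" using nbr(1) by simp
      then have "e \<in> {f1,f2,f3,f4}" using ey unfolding f1_def f2_def f3_def f4_def by blast
      then show ?thesis using h(2) by blast
    qed
    subgoal using mE a2K a3K a4K xK bK wK w'K by (auto simp: Mg_def EK_def m2_def m3_def m4_def p_def p'_def)
    subgoal
    proof -
      have rnot: "r \<notin> m2" "r \<notin> m3" "r \<notin> m4" "r \<notin> p" "r \<notin> p'"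
        using xr wr a2n a3n a4n bn b'n by (auto simp: m2_def m3_def m4_def p_def p'_def)
      show ?thesis using rnot unfolding Mg_def f1_def f2_def f3_def f4_def by blast
    qed
    subgoal
    proof -
      have "card Mg \<le> length [m2,m3,m4,p,p']" unfolding Mg_def by (metis card_length list.set(1) list.set(2))
      then show ?thesis by simp
    qed
    subgoal for e f
    proof -
      assume h: "e \<in> Mg" "f \<in> Mg" "e \<noteq> f"
      have i2: "m3 \<inter> m2 = {}" "m4 \<inter> m2 = {}" "p \<inter> m2 = {}" "p' \<inter> m2 = {}" "m4 \<inter> m3 = {}"
        "p \<inter> m3 = {}" "p' \<inter> m3 = {}" "p \<inter> m4 = {}" "p' \<inter> m4 = {}" "p' \<inter> p = {}"
        using i1 by (simp_all add: Int_commute)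
      have "e \<in> {m2,m3,m4,p,p'}" "f \<in> {m2,m3,m4,p,p'}" using h(1,2) by (simp_all add: Mg_def)
      then show ?thesis by (elim insertE emptyE) (use h(3) i1 i2 in simp_all)
    qed
    subgoal for e by (simp add: rep_def Mg_def)
    subgoal for e using rep_simps unfolding Mg_def by auto
    subgoal for e f
    proof -
      assume h: "e \<in> Mg" "f \<in> Mg" "rep e = rep f"
      have cls: "(g \<in> {m2,m3,m4} \<and> rep g = m2) \<or> (g \<in> {p,p'} \<and> rep g = p)" if "g \<in> Mg" for g
        using that rep_simps unfolding Mg_def by auto
      have self: "\<not> conf g g" for g by (simp add: conf_def)
      have ncM: "\<not> conf g g'" if "g \<in> {m2,m3,m4}" "g' \<in> {m2,m3,m4}" for g g'
        using that nc23 nc24 nc34 self conf_sym by blast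
      have ncP: "\<not> conf g g'" if "g \<in> {p,p'}" "g' \<in> {p,p'}" for g g'
        using that ncp self conf_sym by blast
      show ?thesis using cls[OF h(1)] cls[OF h(2)] h(3) nq(3) ncM ncP by metis
    qed
    subgoal by (rule cb1)
    subgoal by (rule cb2)
    subgoal by (rule cb3)
    done
  then show ?thesis by (simp add: K_def)
qed

end


context G4 begin

lemma three_le: "x \<in> S \<Longrightarrow> y \<in> S \<Longrightarrow> z \<in> S \<Longrightarrow> distinct [x,y,z] \<Longrightarrow> finite S \<Longrightarrow> 3 \<le> card S"
proof -
  assume h: "x \<in> S" "y \<in> S" "z \<in> S" "distinct [x,y,z]" "finite S"
  have "card {x,y,z} \<le> card S" using h by (intro card_mono) auto
  moreover have "card {x,y,z} = 3" using h(4) by simp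
  ultimately show ?thesis by simp
qed

lemma two_le: "x \<in> S \<Longrightarrow> y \<in> S \<Longrightarrow> x \<noteq> y \<Longrightarrow> finite S \<Longrightarrow> 2 \<le> card S"
proof -
  assume h: "x \<in> S" "y \<in> S" "x \<noteq> y" "finite S"
  have "card {x,y} \<le> card S" using h by (intro card_mono) auto
  moreover have "card {x,y} = 2" using h(3) by simp
  ultimately show ?thesis by simp
qed

lemma fin_Ms: "finite (Ms u v)" using finE by (simp add: Ms_def)

lemma Ms_I: "{x,y} \<in> E \<Longrightarrow> {u,x} \<in> E \<Longrightarrow> x \<noteq> v \<Longrightarrow> {v,y} \<in> E \<Longrightarrow> y \<noteq> u \<Longrightarrow> {x,y} \<in> Ms u v"
  unfolding Ms_def nb_def by blast

lemma pendNc: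
  assumes cyc: "{a,b} \<in> E" "{b,c} \<in> E" "{c,d} \<in> E" "{d,a} \<in> E" "a \<noteq> c" "b \<noteq> d"
    and ay: "{a,y} \<in> E" "y \<noteq> b" "y \<noteq> d"
  shows "{a,y} \<in> Nc {a,b}" "{a,y} \<in> Nc {b,c}" "{a,y} \<in> Nc {c,d}" "{a,y} \<in> Nc {d,a}"
proof -
  have yc: "y \<noteq> c"
  proof
    assume "y = c" then show False using tf[of a b c] cyc ay by simp
  qed
  have ya: "y \<noteq> a" using adjD(1)[OF ay(1)] by simp
  have ab: "a \<noteq> b" "b \<noteq> c" "c \<noteq> d" "d \<noteq> a" using cyc adjD(1) by blast+
  show "{a,y} \<in> Nc {a,b}" using conf_share[of "{a,b}" "{a,y}" a] ay by (auto simp: Nc_def doubleton_eq_iff)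
  show "{a,y} \<in> Nc {d,a}" using conf_share[of "{d,a}" "{a,y}" a] ay ab by (auto simp: Nc_def doubleton_eq_iff)
  have "{y,a} \<in> E" using ay(1) by (simp add: insert_commute)
  then have "{b,c} \<in> Nc {y,a}" "{y,a} \<in> Nc {b,c}"
    using path_conf'[of y a b c] cyc ay ab ya yc by auto
  then show "{a,y} \<in> Nc {b,c}" by (simp add: insert_commute)
  have "{a,d} \<in> E" "{d,c} \<in> E" using cyc by (simp_all add: insert_commute)
  then have "{y,a} \<in> Nc {d,c}" using path_conf'(2)[of y a d c] \<open>{y,a} \<in> E\<close> ay ab ya yc cyc by auto
  then show "{a,y} \<in> Nc {c,d}" by (simp add: insert_commute)
qed

lemma crossNc:
  assumes cyc: "{a,b} \<in> E" "{b,c} \<in> E" "{c,d} \<in> E" "{d,a} \<in> E" "a \<noteq> c" "b \<noteq> d"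
    and st: "{b,s} \<in> E" "{d,t} \<in> E" "{s,t} \<in> E" "s \<noteq> a" "s \<noteq> c" "t \<noteq> a" "t \<noteq> c"
  shows "{s,t} \<in> Nc {a,b}" "{s,t} \<in> Nc {b,c}" "{s,t} \<in> Nc {c,d}" "{s,t} \<in> Nc {d,a}"
proof -
  have ab: "a \<noteq> b" "b \<noteq> c" "c \<noteq> d" "d \<noteq> a" using cyc adjD(1) by blast+
  have sd: "s \<noteq> d"
  proof
    assume "s = d" then show False using tf[of a b d] cyc st by (simp add: insert_commute)
  qed
  have tb: "t \<noteq> b"
  proof
    assume "t = b" then show False using tf[of a b d] cyc st by (simp add: insert_commute)
  qed
  have o: "s \<noteq> b" "t \<noteq> d" "s \<noteq> t" using adjD(1) st by blast+
  show "{s,t} \<in> Nc {a,b}" using path_conf'(1)[of a b s t] cyc st ab sd tb o by auto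
  have "{c,b} \<in> E" using cyc by (simp add: insert_commute)
  then have "{s,t} \<in> Nc {c,b}" using path_conf'(1)[of c b s t] st ab sd tb o cyc by auto
  then show "{s,t} \<in> Nc {b,c}" by (simp add: insert_commute)
  have "{t,s} \<in> E" using st by (simp add: insert_commute)
  then have "{t,s} \<in> Nc {c,d}" using path_conf'(1)[of c d t s] st ab sd tb o cyc by auto
  then show "{s,t} \<in> Nc {c,d}" by (simp add: insert_commute)
  have "{a,d} \<in> E" using cyc by (simp add: insert_commute)
  then have "{t,s} \<in> Nc {a,d}" using path_conf'(1)[of a d t s] \<open>{t,s} \<in> E\<close> st ab sd tb o cyc by auto
  then show "{s,t} \<in> Nc {d,a}" by (simp add: insert_commute)
qed

lemma Ms_base:
  assumes cyc: "{a,b} \<in> E" "{b,c} \<in> E" "{c,d} \<in> E" "{d,a} \<in> E" "a \<noteq> c" "b \<noteq> d"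
  shows "{d,c} \<in> Ms a b"
  using Ms_I[of d c a b] cyc by (simp add: insert_commute)

lemma cycFW:
  assumes rV: "r \<in> V" and aK: "a \<in> compo r"
    and cyc: "{a,b} \<in> E" "{b,c} \<in> E" "{c,d} \<in> E" "{d,a} \<in> E" "a \<noteq> c" "b \<noteq> d"
    and MgN: "Mg \<subseteq> Nc {a,b}" "Mg \<subseteq> Nc {b,c}" "Mg \<subseteq> Nc {c,d}" "Mg \<subseteq> Nc {d,a}"
    and Mg: "card Mg \<le> 22" "\<And>e f. e \<in> Mg \<Longrightarrow> f \<in> Mg \<Longrightarrow> e \<noteq> f \<Longrightarrow> e \<inter> f = {}"
    and rep: "\<And>e. e \<notin> Mg \<Longrightarrow> rep e = e" "\<And>e. e \<in> Mg \<Longrightarrow> rep e \<in> Mg"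
      "\<And>e f. e \<in> Mg \<Longrightarrow> f \<in> Mg \<Longrightarrow> rep e = rep f \<Longrightarrow> \<not> conf e f"
    and G: "G \<subseteq> Mg" "\<And>g. g \<in> G \<Longrightarrow> rep g \<in> Mg - G \<and> rep (rep g) = rep g"
    and bd: "3 \<le> card G + card (Ms a b)" "2 \<le> card G + card (Ms b c)" "2 \<le> card G + card (Ms c d)"
  shows "\<exists>col. (\<forall>e\<in>EK (compo r). col e < (22::nat)) \<and> (\<forall>e\<in>EK (compo r). \<forall>f\<in>EK (compo r). conf e f \<longrightarrow> col e \<noteq> col f)"
proof -
  define K where "K = compo r"
  have KV: "K \<subseteq> V" using comp_V rV by (simp add: K_def)
  have Kcl: "w \<in> K" if "v \<in> K" "{v,w} \<in> E" for v w using that comp_cl by (simp add: K_def)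
  have aK': "a \<in> K" using aK by (simp add: K_def)
  have bK: "b \<in> K" using Kcl[OF aK' cyc(1)] .
  have cK: "c \<in> K" using Kcl[OF bK cyc(2)] .
  have dK: "d \<in> K" using Kcl[OF cK cyc(3)] .
  have ne: "a \<noteq> b" "b \<noteq> c" "c \<noteq> d" "d \<noteq> a" using cyc adjD(1) by blast+
  obtain lev :: "'a \<Rightarrow> nat" where lev: "\<forall>v\<in>K. 0 < lev v \<longrightarrow> (\<exists>u. {u,v} \<in> E \<and> lev u < lev v)"
      "\<forall>v\<in>K. lev v = 0 \<longrightarrow> v \<in> {a,b,c,d}"
  proof -
    have "(a,r) \<in> Adj\<^sup>*" using aK rtr_sym by (simp add: compo_def)
    then have "\<exists>\<rho>\<in>{a,b,c,d}. (\<rho>,v) \<in> Adj\<^sup>*" if "v \<in> K" for v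
      using that by (auto simp: K_def compo_def intro: rtrancl_trans)
    then show ?thesis using lev_exists[of K "{a,b,c,d}"] that by blast
  qed
  define f1 where "f1 = {a,b}"
  define f2 where "f2 = {b,c}"
  define f3 where "f3 = {c,d}"
  define f4 where "f4 = {d,a}"
  have fEK: "f1 \<in> EK K" "f2 \<in> EK K" "f3 \<in> EK K" "f4 \<in> EK K"
    using cyc aK' bK cK dK by (auto simp: EK_def f1_def f2_def f3_def f4_def)
  have fdist: "distinct [f1,f2,f3,f4]"
    using ne cyc(5,6) by (auto simp: f1_def f2_def f3_def f4_def doubleton_eq_iff)
  have cyc': "{b,a} \<in> E" "{c,b} \<in> E" "{d,c} \<in> E" "{a,d} \<in> E" using cyc by (simp_all add: insert_commute)
  have pend: "e \<in> Nc f1 \<and> e \<in> Nc f2 \<and> e \<in> Nc f3 \<and> e \<in> Nc f4"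
    if eh: "e \<in> E" "e \<notin> {f1,f2,f3,f4}" "x \<in> e" "x \<in> {a,b,c,d}" for e x
  proof -
    obtain p q where pq: "e = {p,q}" using edgeD eh(1) by blast
    have "\<exists>y. e = {x,y}" using pq eh(3) by (auto simp: insert_commute)
    then obtain y where ey: "e = {x,y}" by blast
    have eE: "{x,y} \<in> E" using eh(1) ey by simp
    consider "x = a" | "x = b" | "x = c" | "x = d" using eh(4) by blast
    then show ?thesis
    proof cases
      case 1
      have "y \<noteq> b" "y \<noteq> d" using eh(2) ey 1 by (auto simp: f1_def f4_def insert_commute)
      then show ?thesis using pendNc[OF cyc, of y] eE 1 ey by (simp add: f1_def f2_def f3_def f4_def)
    next
      case 2
      have "y \<noteq> c" "y \<noteq> a" using eh(2) ey 2 by (auto simp: f1_def f2_def insert_commute)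
      then show ?thesis using pendNc[OF cyc(2,3,4,1) cyc(6) cyc(5)[symmetric], of y] eE 2 ey ne
        by (simp add: f1_def f2_def f3_def f4_def)
    next
      case 3
      have "y \<noteq> d" "y \<noteq> b" using eh(2) ey 3 by (auto simp: f2_def f3_def insert_commute)
      then show ?thesis using pendNc[OF cyc(3,4,1,2) cyc(5)[symmetric] cyc(6)[symmetric], of y] eE 3 ey
        by (simp add: f1_def f2_def f3_def f4_def)
    next
      case 4
      have "y \<noteq> a" "y \<noteq> c" using eh(2) ey 4 by (auto simp: f3_def f4_def insert_commute)
      then show ?thesis using pendNc[OF cyc(4,1,2,3) cyc(6)[symmetric] cyc(5), of y] eE 4 ey
        by (simp add: f1_def f2_def f3_def f4_def)
    qed
  qed
  have MgNf: "Mg \<subseteq> Nc f1" "Mg \<subseteq> Nc f2" "Mg \<subseteq> Nc f3" "Mg \<subseteq> Nc f4"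
    using MgN by (simp_all add: f1_def f2_def f3_def f4_def)
  have bound: "card (rep ` Nc {u,v}) + card G + card (Ms u v) \<le> 24"
    if "{u,v} \<in> E" "Mg \<subseteq> Nc {u,v}" for u v
  proof (rule final_bound[OF that(1)])
    show "G \<subseteq> Nc {u,v}" using G(1) that(2) by blast
    fix g assume "g \<in> G"
    then show "rep g \<in> Nc {u,v} - G \<and> rep (rep g) = rep g" using G(2) that(2) by blast
  qed
  have main: "\<exists>col. (\<forall>e\<in>EK K. col e < (22::nat)) \<and> (\<forall>e\<in>EK K. \<forall>f\<in>EK K. conf e f \<longrightarrow> col e \<noteq> col f)"
    apply (rule framework[where K=K and lev=lev and Mg=Mg and rep=rep and fa=f1 and fb=f2 and fc=f3 and fd=f4])
    subgoal by (rule KV)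
    subgoal by (rule Kcl)
    subgoal using lev(1) by blast
    subgoal by (rule fEK(1))
    subgoal by (rule fEK(2))
    subgoal by (rule fEK(3))
    subgoal by (rule fEK(4))
    subgoal by (rule fdist)
    subgoal using conf_share[of f1 f2 b] fdist by (simp add: f1_def f2_def)
    subgoal using path_conf[of a b c d] cyc ne by (simp add: f1_def f3_def)
    subgoal using conf_share[of f1 f4 a] fdist by (simp add: f1_def f4_def)
    subgoal using conf_share[of f2 f3 c] fdist by (simp add: f2_def f3_def)
    subgoal using path_conf[of b c d a] cyc ne by (simp add: f2_def f4_def)
    subgoal using conf_share[of f3 f4 d] fdist by (simp add: f3_def f4_def)
    subgoal for e
    proof -
      assume h: "e \<in> EK K" "e \<notin> {f1,f2,f3,f4}" "e \<notin> Mg" "\<exists>x\<in>e. lev x = 0"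
      then obtain x where x: "x \<in> e" "lev x = 0" by blast
      have "x \<in> K" using h(1) x(1) by (auto simp: EK_def)
      then have xR: "x \<in> {a,b,c,d}" using lev(2) x(2) by blast
      have eE: "e \<in> E" using h(1) by (simp add: EK_def)
      have "e \<in> Nc f1 \<and> e \<in> Nc f2 \<and> e \<in> Nc f3 \<and> e \<in> Nc f4" using pend[OF eE h(2) x(1) xR] .
      then have "{f \<in> {f1,f2,f3,f4}. conf e f} = {f1,f2,f3,f4}" using conf_sym by (auto simp: Nc_def)
      then show ?thesis using fdist by simp
    qed
    subgoal using MgN(1) Nc_EK[of K f1] Kcl fEK(1) by (auto simp: f1_def)
    subgoal using MgNf by (auto simp: Nc_def conf_def)
    subgoal by (rule Mg(1))
    subgoal for e f by (rule Mg(2))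
    subgoal for e by (rule rep(1))
    subgoal for e by (rule rep(2))
    subgoal for e f by (rule rep(3))
    subgoal using bound[OF cyc(1) MgN(1)] bd(1) by (simp add: f1_def)
    subgoal using bound[OF cyc(2) MgN(2)] bd(2) by (simp add: f2_def)
    subgoal using bound[OF cyc(3) MgN(3)] bd(3) by (simp add: f3_def)
    done
  then show ?thesis by (simp add: K_def)
qed

lemma Nc_ne: "g \<in> Nc f \<Longrightarrow> g \<noteq> {}"
  using edgeD by (fastforce simp: Nc_def)

lemma self_nc: "\<not> conf g g" by (simp add: conf_def)

lemma cycFW0:
  assumes rV: "r \<in> V" and aK: "a \<in> compo r"
    and cyc: "{a,b} \<in> E" "{b,c} \<in> E" "{c,d} \<in> E" "{d,a} \<in> E" "a \<noteq> c" "b \<noteq> d"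
    and bd: "3 \<le> card (Ms a b)" "2 \<le> card (Ms b c)" "2 \<le> card (Ms c d)"
  shows "\<exists>col. (\<forall>e\<in>EK (compo r). col e < (22::nat)) \<and> (\<forall>e\<in>EK (compo r). \<forall>f\<in>EK (compo r). conf e f \<longrightarrow> col e \<noteq> col f)"
  by (rule cycFW[OF rV aK cyc, where Mg="{}" and rep="\<lambda>x. x" and G="{}"]) (use bd in auto)

lemma cycFW1:
  assumes rV: "r \<in> V" and aK: "a \<in> compo r"
    and cyc: "{a,b} \<in> E" "{b,c} \<in> E" "{c,d} \<in> E" "{d,a} \<in> E" "a \<noteq> c" "b \<noteq> d"
    and gN: "g \<in> Nc {a,b}" "g \<in> Nc {b,c}" "g \<in> Nc {c,d}" "g \<in> Nc {d,a}"
    and hN: "h \<in> Nc {a,b}" "h \<in> Nc {b,c}" "h \<in> Nc {c,d}" "h \<in> Nc {d,a}"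
    and gh: "g \<inter> h = {}" "\<not> conf g h"
    and bd: "2 \<le> card (Ms a b)"
  shows "\<exists>col. (\<forall>e\<in>EK (compo r). col e < (22::nat)) \<and> (\<forall>e\<in>EK (compo r). \<forall>f\<in>EK (compo r). conf e f \<longrightarrow> col e \<noteq> col f)"
proof -
  have gne: "g \<noteq> h" using gh(1) Nc_ne[OF gN(1)] by auto
  define rep where "rep x = (if x = h then g else x)" for x
  have b2: "{a,d} \<in> Ms b c" using Ms_base[OF cyc(2,3,4,1) cyc(6) cyc(5)[symmetric]] .
  have b3: "{b,a} \<in> Ms c d" using Ms_base[OF cyc(3,4,1,2) cyc(5)[symmetric] cyc(6)[symmetric]] .
  have c2: "1 \<le> card (Ms b c)" "1 \<le> card (Ms c d)"
    using b2 b3 fin_Ms by (auto simp: Suc_le_eq card_gt_0_iff)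
  show ?thesis
  proof (rule cycFW[OF rV aK cyc, where Mg="{g,h}" and rep=rep and G="{h}"])
    show "{g,h} \<subseteq> Nc {a,b}" "{g,h} \<subseteq> Nc {b,c}" "{g,h} \<subseteq> Nc {c,d}" "{g,h} \<subseteq> Nc {d,a}"
      using gN hN by auto
    show "card {g,h} \<le> 22" by (simp add: card_insert_if)
    show "e \<inter> f = {}" if "e \<in> {g,h}" "f \<in> {g,h}" "e \<noteq> f" for e f
      using that gh(1) by (auto simp: Int_commute)
    show "rep e = e" if "e \<notin> {g,h}" for e using that by (simp add: rep_def)
    show "rep e \<in> {g,h}" if "e \<in> {g,h}" for e using that by (auto simp: rep_def)
    show "\<not> conf e f" if "e \<in> {g,h}" "f \<in> {g,h}" "rep e = rep f" for e f
      using that gh(2) conf_sym self_nc by (auto simp: rep_def)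
    show "{h} \<subseteq> {g,h}" by simp
    show "rep x \<in> {g,h} - {h} \<and> rep (rep x) = rep x" if "x \<in> {h}" for x
      using that gne by (auto simp: rep_def)
    show "3 \<le> card {h} + card (Ms a b)" "2 \<le> card {h} + card (Ms b c)" "2 \<le> card {h} + card (Ms c d)"
      using bd c2 by auto
  qed
qed

lemma cycFW2:
  assumes rV: "r \<in> V" and aK: "a \<in> compo r"
    and cyc: "{a,b} \<in> E" "{b,c} \<in> E" "{c,d} \<in> E" "{d,a} \<in> E" "a \<noteq> c" "b \<noteq> d"
    and N: "{g1,h1,g2,h2} \<subseteq> Nc {a,b}" "{g1,h1,g2,h2} \<subseteq> Nc {b,c}" "{g1,h1,g2,h2} \<subseteq> Nc {c,d}" "{g1,h1,g2,h2} \<subseteq> Nc {d,a}"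
    and dj: "g1 \<inter> h1 = {}" "g1 \<inter> g2 = {}" "g1 \<inter> h2 = {}" "h1 \<inter> g2 = {}" "h1 \<inter> h2 = {}" "g2 \<inter> h2 = {}"
    and nc: "\<not> conf g1 h1" "\<not> conf g2 h2"
  shows "\<exists>col. (\<forall>e\<in>EK (compo r). col e < (22::nat)) \<and> (\<forall>e\<in>EK (compo r). \<forall>f\<in>EK (compo r). conf e f \<longrightarrow> col e \<noteq> col f)"
proof -
  have ne: "g1 \<noteq> {}" "h1 \<noteq> {}" "g2 \<noteq> {}" "h2 \<noteq> {}" using N(1) Nc_ne by auto
  have nq: "g1 \<noteq> h1" "g1 \<noteq> g2" "g1 \<noteq> h2" "h1 \<noteq> g2" "h1 \<noteq> h2" "g2 \<noteq> h2" using dj ne by auto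
  define rep where "rep x = (if x = h1 then g1 else if x = h2 then g2 else x)" for x
  have b2: "{a,d} \<in> Ms b c" using Ms_base[OF cyc(2,3,4,1) cyc(6) cyc(5)[symmetric]] .
  have b3: "{b,a} \<in> Ms c d" using Ms_base[OF cyc(3,4,1,2) cyc(5)[symmetric] cyc(6)[symmetric]] .
  have b1: "{d,c} \<in> Ms a b" using Ms_base[OF cyc] .
  have c2: "1 \<le> card (Ms a b)" "1 \<le> card (Ms b c)" "1 \<le> card (Ms c d)"
    using b1 b2 b3 fin_Ms by (auto simp: Suc_le_eq card_gt_0_iff)
  have rs: "rep g1 = g1" "rep h1 = g1" "rep g2 = g2" "rep h2 = g2" using nq by (auto simp: rep_def)
  show ?thesis
  proof (rule cycFW[OF rV aK cyc, where Mg="{g1,h1,g2,h2}" and rep=rep and G="{h1,h2}"])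
    show "{g1,h1,g2,h2} \<subseteq> Nc {a,b}" "{g1,h1,g2,h2} \<subseteq> Nc {b,c}" "{g1,h1,g2,h2} \<subseteq> Nc {c,d}"
      "{g1,h1,g2,h2} \<subseteq> Nc {d,a}" using N by auto
    show "card {g1,h1,g2,h2} \<le> 22"
    proof -
      have "card (set [g1,h1,g2,h2]) \<le> length [g1,h1,g2,h2]" by (rule card_length)
      then show ?thesis by simp
    qed
    show "e \<inter> f = {}" if "e \<in> {g1,h1,g2,h2}" "f \<in> {g1,h1,g2,h2}" "e \<noteq> f" for e f
    proof -
      have dj2: "h1 \<inter> g1 = {}" "g2 \<inter> g1 = {}" "h2 \<inter> g1 = {}" "g2 \<inter> h1 = {}" "h2 \<inter> h1 = {}" "h2 \<inter> g2 = {}"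
        using dj by (simp_all add: Int_commute)
      from that(1,2) show ?thesis by (elim insertE emptyE) (use that(3) dj dj2 in simp_all)
    qed
    show "rep e = e" if "e \<notin> {g1,h1,g2,h2}" for e using that by (simp add: rep_def)
    show "rep e \<in> {g1,h1,g2,h2}" if "e \<in> {g1,h1,g2,h2}" for e
      using that by (elim insertE emptyE) (simp_all add: rs)
    show "\<not> conf e f" if "e \<in> {g1,h1,g2,h2}" "f \<in> {g1,h1,g2,h2}" "rep e = rep f" for e f
    proof -
      have nc': "\<not> conf h1 g1" "\<not> conf h2 g2" using nc conf_sym by blast+
      have gg: "g2 \<noteq> g1" using nq by simp
      from that(1,2) show ?thesis
        by (elim insertE emptyE) (use that(3) rs nc nc' gg nq(2) self_nc in simp_all)
    qed
    show "{h1,h2} \<subseteq> {g1,h1,g2,h2}" by auto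
    show "rep x \<in> {g1,h1,g2,h2} - {h1,h2} \<and> rep (rep x) = rep x" if "x \<in> {h1,h2}" for x
      using that by (elim insertE emptyE) (simp_all add: rs nq nq[symmetric])
    have "card {h1,h2} = 2" using nq by simp
    then show "3 \<le> card {h1,h2} + card (Ms a b)" "2 \<le> card {h1,h2} + card (Ms b c)"
      "2 \<le> card {h1,h2} + card (Ms c d)" using c2 by auto
  qed
qed

lemma cycFW3:
  assumes rV: "r \<in> V" and aK: "a \<in> compo r"
    and cyc: "{a,b} \<in> E" "{b,c} \<in> E" "{c,d} \<in> E" "{d,a} \<in> E" "a \<noteq> c" "b \<noteq> d"
    and N: "{g,h1,h2} \<subseteq> Nc {a,b}" "{g,h1,h2} \<subseteq> Nc {b,c}" "{g,h1,h2} \<subseteq> Nc {c,d}" "{g,h1,h2} \<subseteq> Nc {d,a}"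
    and dj: "g \<inter> h1 = {}" "g \<inter> h2 = {}" "h1 \<inter> h2 = {}"
    and nc: "\<not> conf g h1" "\<not> conf g h2" "\<not> conf h1 h2"
  shows "\<exists>col. (\<forall>e\<in>EK (compo r). col e < (22::nat)) \<and> (\<forall>e\<in>EK (compo r). \<forall>f\<in>EK (compo r). conf e f \<longrightarrow> col e \<noteq> col f)"
proof -
  have ne: "g \<noteq> {}" "h1 \<noteq> {}" "h2 \<noteq> {}" using N(1) Nc_ne by auto
  have nq: "g \<noteq> h1" "g \<noteq> h2" "h1 \<noteq> h2" using dj ne by auto
  define rep where "rep x = (if x = h1 \<or> x = h2 then g else x)" for x
  have b2: "{a,d} \<in> Ms b c" using Ms_base[OF cyc(2,3,4,1) cyc(6) cyc(5)[symmetric]] .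
  have b3: "{b,a} \<in> Ms c d" using Ms_base[OF cyc(3,4,1,2) cyc(5)[symmetric] cyc(6)[symmetric]] .
  have b1: "{d,c} \<in> Ms a b" using Ms_base[OF cyc] .
  have c2: "1 \<le> card (Ms a b)" "1 \<le> card (Ms b c)" "1 \<le> card (Ms c d)"
    using b1 b2 b3 fin_Ms by (auto simp: Suc_le_eq card_gt_0_iff)
  have rs: "rep g = g" "rep h1 = g" "rep h2 = g" using nq by (auto simp: rep_def)
  show ?thesis
  proof (rule cycFW[OF rV aK cyc, where Mg="{g,h1,h2}" and rep=rep and G="{h1,h2}"])
    show "{g,h1,h2} \<subseteq> Nc {a,b}" "{g,h1,h2} \<subseteq> Nc {b,c}" "{g,h1,h2} \<subseteq> Nc {c,d}"
      "{g,h1,h2} \<subseteq> Nc {d,a}" using N by auto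
    show "card {g,h1,h2} \<le> 22"
    proof -
      have "card (set [g,h1,h2]) \<le> length [g,h1,h2]" by (rule card_length)
      then show ?thesis by simp
    qed
    show "e \<inter> f = {}" if "e \<in> {g,h1,h2}" "f \<in> {g,h1,h2}" "e \<noteq> f" for e f
    proof -
      have dj2: "h1 \<inter> g = {}" "h2 \<inter> g = {}" "h2 \<inter> h1 = {}" using dj by (simp_all add: Int_commute)
      from that(1,2) show ?thesis by (elim insertE emptyE) (use that(3) dj dj2 in simp_all)
    qed
    show "rep e = e" if "e \<notin> {g,h1,h2}" for e using that by (simp add: rep_def)
    show "rep e \<in> {g,h1,h2}" if "e \<in> {g,h1,h2}" for e
      using that by (elim insertE emptyE) (simp_all add: rs)
    show "\<not> conf e f" if "e \<in> {g,h1,h2}" "f \<in> {g,h1,h2}" "rep e = rep f" for e f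
    proof -
      have nc': "\<not> conf h1 g" "\<not> conf h2 g" "\<not> conf h2 h1" using nc conf_sym by blast+
      from that(1,2) show ?thesis by (elim insertE emptyE) (use nc nc' self_nc in simp_all)
    qed
    show "{h1,h2} \<subseteq> {g,h1,h2}" by auto
    show "rep x \<in> {g,h1,h2} - {h1,h2} \<and> rep (rep x) = rep x" if "x \<in> {h1,h2}" for x
      using that by (elim insertE emptyE) (simp_all add: rs nq)
    have "card {h1,h2} = 2" using nq by simp
    then show "3 \<le> card {h1,h2} + card (Ms a b)" "2 \<le> card {h1,h2} + card (Ms b c)"
      "2 \<le> card {h1,h2} + card (Ms c d)" using c2 by auto
  qed
qed

end

context G4 begin

lemma caseI_a:
  assumes rV: "r \<in> V" and aK: "a \<in> compo r"
    and cyc: "{a,b} \<in> E" "{b,c} \<in> E" "{c,d} \<in> E" "{d,a} \<in> E" "a \<noteq> c" "b \<noteq> d"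
    and z: "{a,z1} \<in> E" "{c,z1} \<in> E" "{a,z2} \<in> E" "{c,z2} \<in> E" "z1 \<noteq> z2"
      "z1 \<noteq> b" "z1 \<noteq> d" "z2 \<noteq> b" "z2 \<noteq> d"
  shows "\<exists>col. (\<forall>e\<in>EK (compo r). col e < (22::nat)) \<and> (\<forall>e\<in>EK (compo r). \<forall>f\<in>EK (compo r). conf e f \<longrightarrow> col e \<noteq> col f)"
proof (rule cycFW0[OF rV aK cyc])
  have ne: "a \<noteq> b" "b \<noteq> c" "c \<noteq> d" "d \<noteq> a" using cyc adjD(1) by blast+
  have zE: "{z1,c} \<in> E" "{z2,c} \<in> E" "{z1,a} \<in> E" using z by (simp_all add: insert_commute)
  have "{d,c} \<in> Ms a b" using Ms_base[OF cyc] .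
  moreover have "{z1,c} \<in> Ms a b" using Ms_I[of z1 c a b] zE z cyc by simp
  moreover have "{z2,c} \<in> Ms a b" using Ms_I[of z2 c a b] zE z cyc by simp
  moreover have "distinct [{d,c},{z1,c},{z2,c}]" using z ne by (auto simp: doubleton_eq_iff)
  ultimately show "3 \<le> card (Ms a b)" by (intro three_le[OF _ _ _ _ fin_Ms])
  have "{a,d} \<in> Ms b c" using Ms_base[OF cyc(2,3,4,1) cyc(6) cyc(5)[symmetric]] .
  moreover have "{a,z1} \<in> Ms b c" using Ms_I[of a z1 b c] z cyc by (simp add: insert_commute)
  moreover have "{a,d} \<noteq> {a,z1}" using z by (auto simp: doubleton_eq_iff)
  ultimately show "2 \<le> card (Ms b c)" by (intro two_le[OF _ _ _ fin_Ms])
  have "{b,a} \<in> Ms c d" using Ms_base[OF cyc(3,4,1,2) cyc(5)[symmetric] cyc(6)[symmetric]] .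
  moreover have "{z1,a} \<in> Ms c d" using Ms_I[of z1 a c d] zE z cyc ne by (simp add: insert_commute)
  moreover have "{b,a} \<noteq> {z1,a}" using z ne by (auto simp: doubleton_eq_iff)
  ultimately show "2 \<le> card (Ms c d)" by (intro two_le[OF _ _ _ fin_Ms])
qed

lemma caseI_b:
  assumes rV: "r \<in> V" and aK: "a \<in> compo r"
    and cyc: "{a,b} \<in> E" "{b,c} \<in> E" "{c,d} \<in> E" "{d,a} \<in> E" "a \<noteq> c" "b \<noteq> d"
    and z: "{a,z} \<in> E" "{c,z} \<in> E" "z \<noteq> b" "z \<noteq> d"
    and w: "{b,w} \<in> E" "{d,w} \<in> E" "w \<noteq> a" "w \<noteq> c"
  shows "\<exists>col. (\<forall>e\<in>EK (compo r). col e < (22::nat)) \<and> (\<forall>e\<in>EK (compo r). \<forall>f\<in>EK (compo r). conf e f \<longrightarrow> col e \<noteq> col f)"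
proof (rule cycFW0[OF rV aK cyc])
  have ne: "a \<noteq> b" "b \<noteq> c" "c \<noteq> d" "d \<noteq> a" using cyc adjD(1) by blast+
  have zE: "{z,c} \<in> E" "{z,a} \<in> E" using z by (simp_all add: insert_commute)
  have "{d,c} \<in> Ms a b" using Ms_base[OF cyc] .
  moreover have "{z,c} \<in> Ms a b" using Ms_I[of z c a b] zE z cyc by simp
  moreover have "{d,w} \<in> Ms a b" using Ms_I[of d w a b] w cyc by (simp add: insert_commute)
  moreover have "distinct [{d,c},{z,c},{d,w}]" using z w ne by (auto simp: doubleton_eq_iff)
  ultimately show "3 \<le> card (Ms a b)" by (intro three_le[OF _ _ _ _ fin_Ms])
  have "{a,d} \<in> Ms b c" using Ms_base[OF cyc(2,3,4,1) cyc(6) cyc(5)[symmetric]] .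
  moreover have "{a,z} \<in> Ms b c" using Ms_I[of a z b c] z cyc by (simp add: insert_commute)
  moreover have "{a,d} \<noteq> {a,z}" using z by (auto simp: doubleton_eq_iff)
  ultimately show "2 \<le> card (Ms b c)" by (intro two_le[OF _ _ _ fin_Ms])
  have "{b,a} \<in> Ms c d" using Ms_base[OF cyc(3,4,1,2) cyc(5)[symmetric] cyc(6)[symmetric]] .
  moreover have "{z,a} \<in> Ms c d" using Ms_I[of z a c d] zE z cyc ne by (simp add: insert_commute)
  moreover have "{b,a} \<noteq> {z,a}" using z ne by (auto simp: doubleton_eq_iff)
  ultimately show "2 \<le> card (Ms c d)" by (intro two_le[OF _ _ _ fin_Ms])
qed

lemma nc22:
  assumes "x1 \<noteq> y1" "x1 \<noteq> y2" "x2 \<noteq> y1" "x2 \<noteq> y2"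
    "{x1,y1} \<notin> E" "{x1,y2} \<notin> E" "{x2,y1} \<notin> E" "{x2,y2} \<notin> E"
  shows "\<not> conf {x1,x2} {y1,y2}" "{x1,x2} \<inter> {y1,y2} = {}"
proof -
  show dj: "{x1,x2} \<inter> {y1,y2} = {}" using assms by auto
  show "\<not> conf {x1,x2} {y1,y2}"
  proof (rule nonconf[OF dj])
    fix x y assume "x \<in> {x1,x2}" "y \<in> {y1,y2}"
    then show "{x,y} \<notin> E" using assms by auto
  qed
qed

lemma caseII:
  assumes rV: "r \<in> V" and aK: "a \<in> compo r"
    and cyc: "{a,b} \<in> E" "{b,c} \<in> E" "{c,d} \<in> E" "{d,a} \<in> E" "a \<noteq> c" "b \<noteq> d"
    and z: "{a,z} \<in> E" "{c,z} \<in> E" "z \<noteq> b" "z \<noteq> d"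
    and p: "{a,p} \<in> E" "p \<noteq> b" "p \<noteq> d"
    and nbb: "nb b = {a,c,s1,s2}" "distinct [a,c,s1,s2]"
    and nbd: "nb d = {a,c,t1,t2}" "distinct [a,c,t1,t2]"
    and nos: "{d,s1} \<notin> E" "{d,s2} \<notin> E"
  shows "\<exists>col. (\<forall>e\<in>EK (compo r). col e < (22::nat)) \<and> (\<forall>e\<in>EK (compo r). \<forall>f\<in>EK (compo r). conf e f \<longrightarrow> col e \<noteq> col f)"
proof -
  have ne: "a \<noteq> b" "b \<noteq> c" "c \<noteq> d" "d \<noteq> a" using cyc adjD(1) by blast+
  have sE: "{b,s1} \<in> E" "{b,s2} \<in> E" using nbb(1) by (auto simp: nb_def)
  have tE: "{d,t1} \<in> E" "{d,t2} \<in> E" using nbd(1) by (auto simp: nb_def)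
  have bd: "{b,d} \<notin> E" using tf[of a b d] cyc by (auto simp: insert_commute)
  have ac: "{a,c} \<notin> E" using tf[of a b c] cyc by auto
  have bt: "{b,t} \<notin> E" if "t \<in> {t1,t2}" for t
  proof
    assume h: "{b,t} \<in> E"
    then have "t \<in> nb b" by (simp add: nb_def)
    then have "t = s1 \<or> t = s2" using nbb nbd that by auto
    then show False using h nos tE that by (auto simp: insert_commute)
  qed
  have b1: "{d,c} \<in> Ms a b" using Ms_base[OF cyc] .
  have zE: "{z,c} \<in> E" "{z,a} \<in> E" using z by (simp_all add: insert_commute)
  have zab: "{z,c} \<in> Ms a b" using Ms_I[of z c a b] zE z cyc by simp
  have dzc: "{d,c} \<noteq> {z,c}" using z ne by (auto simp: doubleton_eq_iff)
  have ab2: "2 \<le> card (Ms a b)" by (rule two_le[OF b1 zab dzc fin_Ms])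
  have b2: "{a,d} \<in> Ms b c" using Ms_base[OF cyc(2,3,4,1) cyc(6) cyc(5)[symmetric]] .
  have zbc: "{a,z} \<in> Ms b c" using Ms_I[of a z b c] z cyc by (simp add: insert_commute)
  have bc2: "2 \<le> card (Ms b c)" by (rule two_le[OF b2 zbc _ fin_Ms]) (use z in \<open>auto simp: doubleton_eq_iff\<close>)
  have b3: "{b,a} \<in> Ms c d" using Ms_base[OF cyc(3,4,1,2) cyc(5)[symmetric] cyc(6)[symmetric]] .
  have zcd: "{z,a} \<in> Ms c d" using Ms_I[of z a c d] zE z cyc ne by (simp add: insert_commute)
  have cd2: "2 \<le> card (Ms c d)" by (rule two_le[OF b3 zcd _ fin_Ms]) (use z ne in \<open>auto simp: doubleton_eq_iff\<close>)
  have sne: "s1 \<noteq> a" "s1 \<noteq> c" "s2 \<noteq> a" "s2 \<noteq> c" "t1 \<noteq> a" "t1 \<noteq> c" "t2 \<noteq> a" "t2 \<noteq> c"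
    using nbb(2) nbd(2) by auto
  have pendb: "{b,s} \<in> Nc {a,b} \<and> {b,s} \<in> Nc {b,c} \<and> {b,s} \<in> Nc {c,d} \<and> {b,s} \<in> Nc {d,a}"
    if "{b,s} \<in> E" "s \<noteq> c" "s \<noteq> a" for s
    using pendNc[OF cyc(2,3,4,1) cyc(6) cyc(5)[symmetric] that] by simp
  have pendd: "{d,t} \<in> Nc {a,b} \<and> {d,t} \<in> Nc {b,c} \<and> {d,t} \<in> Nc {c,d} \<and> {d,t} \<in> Nc {d,a}"
    if "{d,t} \<in> E" "t \<noteq> a" "t \<noteq> c" for t
    using pendNc[OF cyc(4,1,2,3) cyc(6)[symmetric] cyc(5) that] by simp
  show ?thesis
  proof (cases "\<exists>s\<in>{s1,s2}. \<exists>t\<in>{t1,t2}. {s,t} \<notin> E")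
    case True
    then obtain s t where st: "s \<in> {s1,s2}" "t \<in> {t1,t2}" "{s,t} \<notin> E" by blast
    have sE': "{b,s} \<in> E" "s \<noteq> a" "s \<noteq> c" "{d,s} \<notin> E" using st(1) sE sne nos by auto
    have tE': "{d,t} \<in> E" "t \<noteq> a" "t \<noteq> c" "{b,t} \<notin> E" using st(2) tE sne bt by auto
    have sd: "s \<noteq> d" using sE'(1) bd by auto
    have tb: "t \<noteq> b" using tE'(1) bd by (auto simp: insert_commute)
    have stn: "s \<noteq> t" using sE'(4) tE'(1) by auto
    have sb: "s \<noteq> b" using sE'(1) adjD(1) by blast
    have "\<not> conf {b,s} {d,t}" "{b,s} \<inter> {d,t} = {}"
      using nc22[of b d t s] cyc(6) tb sd stn bd tE'(4) sE'(4) st(3) by (auto simp: insert_commute)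
    then show ?thesis
      using cycFW1[OF rV aK cyc, of "{b,s}" "{d,t}"] pendb[OF sE'(1) sE'(3) sE'(2)] pendd[OF tE'(1,2,3)] ab2
      by blast
  next
    case False
    then have allst: "{s,t} \<in> E" if "s \<in> {s1,s2}" "t \<in> {t1,t2}" for s t using that by blast
    show ?thesis
    proof (cases "\<exists>s\<in>{s1,s2}. {p,s} \<in> E")
      case True
      then obtain s where s: "s \<in> {s1,s2}" "{p,s} \<in> E" by blast
      have sb: "{b,s} \<in> E" "s \<noteq> a" "s \<noteq> c" using s(1) sE sne by auto
      have "{p,s} \<in> Ms a b" using Ms_I[of p s a b] s p sb by simp
      moreover have pc: "p \<noteq> c" using p(1) ac by auto
      moreover have "distinct [{d,c},{z,c},{p,s}]" using z ne sb pc p by (auto simp: doubleton_eq_iff)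
      ultimately have "3 \<le> card (Ms a b)" using b1 zab by (intro three_le[OF _ _ _ _ fin_Ms])
      then show ?thesis using cycFW0[OF rV aK cyc] bc2 cd2 by blast
    next
      case nps: False
      show ?thesis
      proof (cases "\<exists>t\<in>{t1,t2}. {p,t} \<in> E")
        case True
        then obtain t where t: "t \<in> {t1,t2}" "{p,t} \<in> E" by blast
        have td: "{d,t} \<in> E" "t \<noteq> a" "t \<noteq> c" using t(1) tE sne by auto
        have dK: "d \<in> compo r" using comp_cl aK cyc by (metis insert_commute)
        have cyc2: "{d,a} \<in> E" "{a,b} \<in> E" "{b,c} \<in> E" "{c,d} \<in> E" "d \<noteq> b" "a \<noteq> c" using cyc by auto
        have m1: "{c,b} \<in> Ms d a" using Ms_base[OF cyc2] .
        have m2: "{c,z} \<in> Ms d a" using Ms_I[of c z d a] z cyc ne by (simp add: insert_commute)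
        have tpE: "{t,p} \<in> E" using t(2) by (simp add: insert_commute)
        have m3: "{t,p} \<in> Ms d a" using Ms_I[of t p d a] tpE td p by (simp add: insert_commute)
        have tz: "t \<noteq> z"
        proof
          assume "t = z" then show False using tf[of a d z] z td cyc by (auto simp: insert_commute)
        qed
        have tb: "t \<noteq> b" using td(1) bd by (auto simp: insert_commute)
        have "distinct [{c,b},{c,z},{t,p}]" using z tz tb td by (auto simp: doubleton_eq_iff)
        then have "3 \<le> card (Ms d a)" by (intro three_le[OF m1 m2 m3 _ fin_Ms])
        then show ?thesis using cycFW0[OF rV dK cyc2] ab2 bc2 by blast
      next
        case npt: False
        have s1b: "{b,s1} \<in> E" "s1 \<noteq> a" "s1 \<noteq> c" using sE sne by auto
        have t1d: "{d,t1} \<in> E" "t1 \<noteq> a" "t1 \<noteq> c" using tE sne by auto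
        have s1t1: "{s1,t1} \<in> E" using allst by simp
        have hN: "{s1,t1} \<in> Nc {a,b}" "{s1,t1} \<in> Nc {b,c}" "{s1,t1} \<in> Nc {c,d}" "{s1,t1} \<in> Nc {d,a}"
          using crossNc[OF cyc s1b(1) t1d(1) s1t1 s1b(2,3) t1d(2,3)] by auto
        have gN: "{a,p} \<in> Nc {a,b}" "{a,p} \<in> Nc {b,c}" "{a,p} \<in> Nc {c,d}" "{a,p} \<in> Nc {d,a}"
          using pendNc[OF cyc p] by auto
        have ps1: "p \<noteq> s1" using tf[of a b p] cyc p s1b by auto
        have pt1: "p \<noteq> t1" using tf[of a d p] cyc p t1d by (auto simp: insert_commute)
        have as1: "{a,s1} \<notin> E" using tf[of a b s1] cyc s1b by auto
        have at1: "{a,t1} \<notin> E" using tf[of a d t1] cyc t1d by (auto simp: insert_commute)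
        have "\<not> conf {a,p} {s1,t1}" "{a,p} \<inter> {s1,t1} = {}"
          using nc22[of a s1 t1 p] s1b t1d ps1 pt1 as1 at1 nps npt by auto
        then show ?thesis using cycFW1[OF rV aK cyc gN hN] ab2 by blast
      qed
    qed
  qed
qed

lemma pairAC:
  assumes cyc: "{a,b} \<in> E" "{b,c} \<in> E" "{c,d} \<in> E" "{d,a} \<in> E" "a \<noteq> c" "b \<noteq> d"
    and p: "{a,p} \<in> E" "p \<noteq> b" "p \<noteq> d" "{c,p} \<notin> E"
    and q: "{c,q} \<in> E" "q \<noteq> b" "q \<noteq> d" "{a,q} \<notin> E"
    and pq: "{p,q} \<notin> E"
  shows "\<not> conf {a,p} {c,q}" "{a,p} \<inter> {c,q} = {}"
proof -
  have ac: "{a,c} \<notin> E" using tf[of a b c] cyc by auto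
  have aq: "a \<noteq> q" using q(1) ac by (auto simp: insert_commute)
  have pc: "p \<noteq> c" using p(1) ac by auto
  have pq': "p \<noteq> q" using p(4) q(1) by auto
  have pcE: "{p,c} \<notin> E" using p(4) by (simp add: insert_commute)
  show "\<not> conf {a,p} {c,q}" "{a,p} \<inter> {c,q} = {}"
    using nc22[of a c q p] cyc(5) aq pc pq' ac q(4) pcE pq by auto
qed

lemma pendcross:
  assumes cyc: "{a,b} \<in> E" "{b,c} \<in> E" "{c,d} \<in> E" "{d,a} \<in> E" "a \<noteq> c" "b \<noteq> d"
    and p: "{a,p} \<in> E" "p \<noteq> b" "p \<noteq> d"
    and st: "{b,s} \<in> E" "{d,t} \<in> E" "s \<noteq> a" "s \<noteq> c" "t \<noteq> a" "t \<noteq> c"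
    and np: "{p,s} \<notin> E" "{p,t} \<notin> E"
  shows "\<not> conf {a,p} {s,t}" "{a,p} \<inter> {s,t} = {}"
proof -
  have ps: "p \<noteq> s" using tf[of a b p] cyc p st by auto
  have pt: "p \<noteq> t" using tf[of a d p] cyc p st by (auto simp: insert_commute)
  have as: "{a,s} \<notin> E" using tf[of a b s] cyc st by auto
  have at: "{a,t} \<notin> E" using tf[of a d t] cyc st by (auto simp: insert_commute)
  show "\<not> conf {a,p} {s,t}" "{a,p} \<inter> {s,t} = {}"
    using nc22[of a s t p] st ps pt as at np by auto
qed

lemma pend4:
  assumes cyc: "{a,b} \<in> E" "{b,c} \<in> E" "{c,d} \<in> E" "{d,a} \<in> E" "a \<noteq> c" "b \<noteq> d"
  shows "{a,y} \<in> E \<Longrightarrow> y \<noteq> b \<Longrightarrow> y \<noteq> d \<Longrightarrow> {a,y} \<in> Nc {a,b} \<and> {a,y} \<in> Nc {b,c} \<and> {a,y} \<in> Nc {c,d} \<and> {a,y} \<in> Nc {d,a}"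
    and "{b,y} \<in> E \<Longrightarrow> y \<noteq> c \<Longrightarrow> y \<noteq> a \<Longrightarrow> {b,y} \<in> Nc {a,b} \<and> {b,y} \<in> Nc {b,c} \<and> {b,y} \<in> Nc {c,d} \<and> {b,y} \<in> Nc {d,a}"
    and "{c,y} \<in> E \<Longrightarrow> y \<noteq> d \<Longrightarrow> y \<noteq> b \<Longrightarrow> {c,y} \<in> Nc {a,b} \<and> {c,y} \<in> Nc {b,c} \<and> {c,y} \<in> Nc {c,d} \<and> {c,y} \<in> Nc {d,a}"
    and "{d,y} \<in> E \<Longrightarrow> y \<noteq> a \<Longrightarrow> y \<noteq> c \<Longrightarrow> {d,y} \<in> Nc {a,b} \<and> {d,y} \<in> Nc {b,c} \<and> {d,y} \<in> Nc {c,d} \<and> {d,y} \<in> Nc {d,a}"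
proof -
  show "{a,y} \<in> E \<Longrightarrow> y \<noteq> b \<Longrightarrow> y \<noteq> d \<Longrightarrow> {a,y} \<in> Nc {a,b} \<and> {a,y} \<in> Nc {b,c} \<and> {a,y} \<in> Nc {c,d} \<and> {a,y} \<in> Nc {d,a}"
    using pendNc[OF cyc] by blast
  show "{b,y} \<in> E \<Longrightarrow> y \<noteq> c \<Longrightarrow> y \<noteq> a \<Longrightarrow> {b,y} \<in> Nc {a,b} \<and> {b,y} \<in> Nc {b,c} \<and> {b,y} \<in> Nc {c,d} \<and> {b,y} \<in> Nc {d,a}"
    using pendNc[OF cyc(2,3,4,1) cyc(6) cyc(5)[symmetric]] by blast
  show "{c,y} \<in> E \<Longrightarrow> y \<noteq> d \<Longrightarrow> y \<noteq> b \<Longrightarrow> {c,y} \<in> Nc {a,b} \<and> {c,y} \<in> Nc {b,c} \<and> {c,y} \<in> Nc {c,d} \<and> {c,y} \<in> Nc {d,a}"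
    using pendNc[OF cyc(3,4,1,2) cyc(5)[symmetric] cyc(6)[symmetric]] by blast
  show "{d,y} \<in> E \<Longrightarrow> y \<noteq> a \<Longrightarrow> y \<noteq> c \<Longrightarrow> {d,y} \<in> Nc {a,b} \<and> {d,y} \<in> Nc {b,c} \<and> {d,y} \<in> Nc {c,d} \<and> {d,y} \<in> Nc {d,a}"
    using pendNc[OF cyc(4,1,2,3) cyc(6)[symmetric] cyc(5)] by blast
qed

lemma caseIIIa:
  assumes rV: "r \<in> V" and aK: "a \<in> compo r"
    and cyc: "{a,b} \<in> E" "{b,c} \<in> E" "{c,d} \<in> E" "{d,a} \<in> E" "a \<noteq> c" "b \<noteq> d"
    and p: "{a,p} \<in> E" "p \<noteq> b" "p \<noteq> d" "{c,p} \<notin> E"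
    and q: "{c,q} \<in> E" "q \<noteq> b" "q \<noteq> d" "{a,q} \<notin> E"
    and pq: "{p,q} \<notin> E"
    and s: "{b,s} \<in> E" "s \<noteq> c" "s \<noteq> a" "{d,s} \<notin> E"
    and t: "{d,t} \<in> E" "t \<noteq> c" "t \<noteq> a" "{b,t} \<notin> E"
    and st: "{s,t} \<notin> E"
  shows "\<exists>col. (\<forall>e\<in>EK (compo r). col e < (22::nat)) \<and> (\<forall>e\<in>EK (compo r). \<forall>f\<in>EK (compo r). conf e f \<longrightarrow> col e \<noteq> col f)"
proof -
  have ne: "a \<noteq> b" "b \<noteq> c" "c \<noteq> d" "d \<noteq> a" using cyc adjD(1) by blast+
  have n1: "\<not> conf {a,p} {c,q}" "{a,p} \<inter> {c,q} = {}" using pairAC[OF cyc p q pq] by auto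
  have n2: "\<not> conf {b,s} {d,t}" "{b,s} \<inter> {d,t} = {}"
    using pairAC[OF cyc(2,3,4,1) cyc(6) cyc(5)[symmetric] s t st] by auto
  have ps: "p \<noteq> s" using tf[of a b p] cyc p s by auto
  have pt: "p \<noteq> t" using tf[of a d p] cyc p t by (auto simp: insert_commute)
  have qs: "q \<noteq> s" using tf[of b c q] cyc q s by (auto simp: insert_commute)
  have qt: "q \<noteq> t" using tf[of c d q] cyc q t by (auto simp: insert_commute)
  have dj: "{a,p} \<inter> {b,s} = {}" "{a,p} \<inter> {d,t} = {}" "{c,q} \<inter> {b,s} = {}" "{c,q} \<inter> {d,t} = {}"
    using ne ps pt qs qt p q s t cyc(5,6) by auto
  have N: "{a,p} \<in> Nc {a,b} \<and> {a,p} \<in> Nc {b,c} \<and> {a,p} \<in> Nc {c,d} \<and> {a,p} \<in> Nc {d,a}"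
    "{c,q} \<in> Nc {a,b} \<and> {c,q} \<in> Nc {b,c} \<and> {c,q} \<in> Nc {c,d} \<and> {c,q} \<in> Nc {d,a}"
    "{b,s} \<in> Nc {a,b} \<and> {b,s} \<in> Nc {b,c} \<and> {b,s} \<in> Nc {c,d} \<and> {b,s} \<in> Nc {d,a}"
    "{d,t} \<in> Nc {a,b} \<and> {d,t} \<in> Nc {b,c} \<and> {d,t} \<in> Nc {c,d} \<and> {d,t} \<in> Nc {d,a}"
    using pend4(1)[OF cyc p(1,2,3)] pend4(3)[OF cyc q(1,3,2)] pend4(2)[OF cyc s(1,2,3)] pend4(4)[OF cyc t(1,3,2)]
    by auto
  show ?thesis
    by (rule cycFW2[OF rV aK cyc, of "{a,p}" "{c,q}" "{b,s}" "{d,t}"])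
       (use N n1 n2 dj in \<open>auto simp: Int_commute\<close>)
qed

lemma choose4:
  assumes d: "distinct [s1,s2,t1,t2]"
    and aP: "\<And>x y. x \<in> {s1,s2,t1,t2} \<Longrightarrow> y \<in> {s1,s2,t1,t2} \<Longrightarrow> P x \<Longrightarrow> P y \<Longrightarrow> x = y"
    and aQ: "\<And>x y. x \<in> {s1,s2,t1,t2} \<Longrightarrow> y \<in> {s1,s2,t1,t2} \<Longrightarrow> Q x \<Longrightarrow> Q y \<Longrightarrow> x = y"
    and aPQ: "\<And>x. x \<in> {s1,s2,t1,t2} \<Longrightarrow> P x \<Longrightarrow> Q x \<Longrightarrow> False"
  shows "\<exists>s s' t t'. ((s = s1 \<and> s' = s2) \<or> (s = s2 \<and> s' = s1)) \<and> ((t = t1 \<and> t' = t2) \<or> (t = t2 \<and> t' = t1))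
     \<and> \<not> P s \<and> \<not> P t \<and> \<not> Q s' \<and> \<not> Q t'"
proof -
  have p1: "\<not> (P s1 \<and> P s2)" "\<not> (P t1 \<and> P t2)" using aP[of s1 s2] aP[of t1 t2] d by auto
  have q1: "\<not> (Q s1 \<and> Q s2)" "\<not> (Q t1 \<and> Q t2)" using aQ[of s1 s2] aQ[of t1 t2] d by auto
  have pq: "\<not> (P s1 \<and> Q s1)" "\<not> (P s2 \<and> Q s2)" "\<not> (P t1 \<and> Q t1)" "\<not> (P t2 \<and> Q t2)"
    using aPQ[of s1] aPQ[of s2] aPQ[of t1] aPQ[of t2] by auto
  have S: "(\<not> P s1 \<and> \<not> Q s2) \<or> (\<not> P s2 \<and> \<not> Q s1)" using p1(1) q1(1) pq(1,2) by blast
  have T: "(\<not> P t1 \<and> \<not> Q t2) \<or> (\<not> P t2 \<and> \<not> Q t1)" using p1(2) q1(2) pq(3,4) by blast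
  from S T show ?thesis by blast
qed

lemma caseIIIb:
  assumes rV: "r \<in> V" and aK: "a \<in> compo r"
    and cyc: "{a,b} \<in> E" "{b,c} \<in> E" "{c,d} \<in> E" "{d,a} \<in> E" "a \<noteq> c" "b \<noteq> d"
    and p: "{a,p} \<in> E" "p \<noteq> b" "p \<noteq> d" "{c,p} \<notin> E"
    and q: "{c,q} \<in> E" "q \<noteq> b" "q \<noteq> d" "{a,q} \<notin> E"
    and pq: "{p,q} \<notin> E"
    and nbb: "nb b = {a,c,s1,s2}" "distinct [a,c,s1,s2]"
    and nbd: "nb d = {a,c,t1,t2}" "distinct [a,c,t1,t2]"
    and nos: "{d,s1} \<notin> E" "{d,s2} \<notin> E"
    and allst: "\<And>s t. s \<in> {s1,s2} \<Longrightarrow> t \<in> {t1,t2} \<Longrightarrow> {s,t} \<in> E"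
  shows "\<exists>col. (\<forall>e\<in>EK (compo r). col e < (22::nat)) \<and> (\<forall>e\<in>EK (compo r). \<forall>f\<in>EK (compo r). conf e f \<longrightarrow> col e \<noteq> col f)"
proof -
  have ne: "a \<noteq> b" "b \<noteq> c" "c \<noteq> d" "d \<noteq> a" using cyc adjD(1) by blast+
  have sE: "{b,s1} \<in> E" "{b,s2} \<in> E" using nbb(1) by (auto simp: nb_def)
  have tE: "{d,t1} \<in> E" "{d,t2} \<in> E" using nbd(1) by (auto simp: nb_def)
  have sne: "s1 \<noteq> a" "s1 \<noteq> c" "s2 \<noteq> a" "s2 \<noteq> c" "t1 \<noteq> a" "t1 \<noteq> c" "t2 \<noteq> a" "t2 \<noteq> c"
    using nbb(2) nbd(2) by auto
  have ac: "{a,c} \<notin> E" using tf[of a b c] cyc by auto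
  have pc: "p \<noteq> c" using p(1) ac by auto
  have n1: "\<not> conf {a,p} {c,q}" "{a,p} \<inter> {c,q} = {}" using pairAC[OF cyc p q pq] by auto
  have gN: "{a,p} \<in> Nc {a,b}" "{a,p} \<in> Nc {b,c}" "{a,p} \<in> Nc {c,d}" "{a,p} \<in> Nc {d,a}"
    using pend4(1)[OF cyc p(1,2,3)] by auto
  have hN: "{c,q} \<in> Nc {a,b}" "{c,q} \<in> Nc {b,c}" "{c,q} \<in> Nc {c,d}" "{c,q} \<in> Nc {d,a}"
    using pend4(3)[OF cyc q(1,3,2)] by auto
  have bK: "b \<in> compo r" using comp_cl[OF aK cyc(1)] .
  have cK: "c \<in> compo r" using comp_cl[OF bK cyc(2)] .
  have dK: "d \<in> compo r" using comp_cl[OF cK cyc(3)] .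
  show ?thesis
  proof (cases "\<exists>s\<in>{s1,s2}. {p,s} \<in> E")
    case True
    then obtain s where s: "s \<in> {s1,s2}" "{p,s} \<in> E" by blast
    have sb: "{b,s} \<in> E" "s \<noteq> a" "s \<noteq> c" using s(1) sE sne by auto
    have m1: "{d,c} \<in> Ms a b" using Ms_base[OF cyc] .
    have m2: "{p,s} \<in> Ms a b" using Ms_I[of p s a b] s p sb by simp
    have "{d,c} \<noteq> {p,s}" using p pc sb by (auto simp: doubleton_eq_iff)
    then have "2 \<le> card (Ms a b)" by (intro two_le[OF m1 m2 _ fin_Ms])
    then show ?thesis using cycFW1[OF rV aK cyc gN hN n1(2) n1(1)] by blast
  next
    case nps: False
    show ?thesis
    proof (cases "\<exists>t\<in>{t1,t2}. {p,t} \<in> E")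
      case True
      then obtain t where t: "t \<in> {t1,t2}" "{p,t} \<in> E" by blast
      have td: "{d,t} \<in> E" "t \<noteq> a" "t \<noteq> c" using t(1) tE sne by auto
      have cyc2: "{d,a} \<in> E" "{a,b} \<in> E" "{b,c} \<in> E" "{c,d} \<in> E" "d \<noteq> b" "a \<noteq> c" using cyc by auto
      have m1: "{c,b} \<in> Ms d a" using Ms_base[OF cyc2] .
      have m2: "{t,p} \<in> Ms d a" using Ms_I[of t p d a] t p td by (simp add: insert_commute)
      have "{c,b} \<noteq> {t,p}" using td pc by (auto simp: doubleton_eq_iff)
      then have "2 \<le> card (Ms d a)" by (intro two_le[OF m1 m2 _ fin_Ms])
      then show ?thesis using cycFW1[OF rV dK cyc2, of "{a,p}" "{c,q}"] gN hN n1 by blast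
    next
      case npt: False
      show ?thesis
      proof (cases "\<exists>s\<in>{s1,s2}. {q,s} \<in> E")
        case True
        then obtain s where s: "s \<in> {s1,s2}" "{q,s} \<in> E" by blast
        have sb: "{b,s} \<in> E" "s \<noteq> a" "s \<noteq> c" using s(1) sE sne by auto
        have cyc2: "{b,c} \<in> E" "{c,d} \<in> E" "{d,a} \<in> E" "{a,b} \<in> E" "b \<noteq> d" "c \<noteq> a" using cyc by auto
        have m1: "{a,d} \<in> Ms b c" using Ms_base[OF cyc2] .
        have m2: "{s,q} \<in> Ms b c" using Ms_I[of s q b c] s q sb by (simp add: insert_commute)
        have bdE: "{b,d} \<notin> E" using tf[of a b d] cyc by (auto simp: insert_commute)
        have sd: "s \<noteq> d" using sb(1) bdE by auto
        have "{a,d} \<noteq> {s,q}" using sb sd by (auto simp: doubleton_eq_iff)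
        then have "2 \<le> card (Ms b c)" by (intro two_le[OF m1 m2 _ fin_Ms])
        then show ?thesis using cycFW1[OF rV bK cyc2, of "{a,p}" "{c,q}"] gN hN n1 by blast
      next
        case nqs: False
        show ?thesis
        proof (cases "\<exists>t\<in>{t1,t2}. {q,t} \<in> E")
          case True
          then obtain t where t: "t \<in> {t1,t2}" "{q,t} \<in> E" by blast
          have td: "{d,t} \<in> E" "t \<noteq> a" "t \<noteq> c" using t(1) tE sne by auto
          have cyc2: "{c,d} \<in> E" "{d,a} \<in> E" "{a,b} \<in> E" "{b,c} \<in> E" "c \<noteq> a" "d \<noteq> b" using cyc by auto
          have m1: "{b,a} \<in> Ms c d" using Ms_base[OF cyc2] .
          have m2: "{q,t} \<in> Ms c d" using Ms_I[of q t c d] t q td by (simp add: insert_commute)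
          have aq: "a \<noteq> q" using q(1) ac by (auto simp: insert_commute)
          have "{b,a} \<noteq> {q,t}" using td q aq by (auto simp: doubleton_eq_iff)
          then have "2 \<le> card (Ms c d)" by (intro two_le[OF m1 m2 _ fin_Ms])
          then show ?thesis using cycFW1[OF rV cK cyc2, of "{a,p}" "{c,q}"] gN hN n1 by blast
        next
          case nqt: False
          have s1b: "{b,s1} \<in> E" "s1 \<noteq> a" "s1 \<noteq> c" using sE sne by auto
          have t1d: "{d,t1} \<in> E" "t1 \<noteq> a" "t1 \<noteq> c" using tE sne by auto
          have s1t1: "{s1,t1} \<in> E" using allst by simp
          have xN: "{s1,t1} \<in> Nc {a,b}" "{s1,t1} \<in> Nc {b,c}" "{s1,t1} \<in> Nc {c,d}" "{s1,t1} \<in> Nc {d,a}"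
            using crossNc[OF cyc s1b(1) t1d(1) s1t1 s1b(2,3) t1d(2,3)] by auto
          have n2: "\<not> conf {a,p} {s1,t1}" "{a,p} \<inter> {s1,t1} = {}"
            using pendcross[OF cyc p(1,2,3) s1b(1) t1d(1) s1b(2,3) t1d(2,3)] nps npt by auto
          have cyc2: "{c,d} \<in> E" "{d,a} \<in> E" "{a,b} \<in> E" "{b,c} \<in> E" "c \<noteq> a" "d \<noteq> b" using cyc by auto
          have n3: "\<not> conf {c,q} {t1,s1}" "{c,q} \<inter> {t1,s1} = {}"
            using pendcross[OF cyc2 q(1,3,2) t1d(1) s1b(1) t1d(3,2) s1b(3,2)] nqs nqt by auto
          have n3': "\<not> conf {c,q} {s1,t1}" "{c,q} \<inter> {s1,t1} = {}" using n3 by (simp_all add: insert_commute)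
          show ?thesis
            by (rule cycFW3[OF rV aK cyc, of "{a,p}" "{c,q}" "{s1,t1}"])
               (use gN hN xN n1 n2 n3' in auto)
        qed
      qed
    qed
  qed
qed

lemma forced: "nb v = {x,y,z,w0} \<Longrightarrow> u1 \<in> nb v \<Longrightarrow> u2 \<in> nb v \<Longrightarrow> u1 \<notin> {x,y,z} \<Longrightarrow> u2 \<notin> {x,y,z} \<Longrightarrow> u1 = u2"
  by auto

lemma caseIIId:
  assumes rV: "r \<in> V" and aK: "a \<in> compo r"
    and cyc: "{a,b} \<in> E" "{b,c} \<in> E" "{c,d} \<in> E" "{d,a} \<in> E" "a \<noteq> c" "b \<noteq> d"
    and nba: "nb a = {b,d,p1,p2}" "distinct [b,d,p1,p2]"
    and nbc: "nb c = {b,d,q1,q2}" "distinct [b,d,q1,q2]"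
    and nbb: "nb b = {a,c,s1,s2}" "distinct [a,c,s1,s2]"
    and nbd: "nb d = {a,c,t1,t2}" "distinct [a,c,t1,t2]"
    and nop: "{c,p1} \<notin> E" "{c,p2} \<notin> E"
    and nos: "{d,s1} \<notin> E" "{d,s2} \<notin> E"
    and allpq: "\<And>p q. p \<in> {p1,p2} \<Longrightarrow> q \<in> {q1,q2} \<Longrightarrow> {p,q} \<in> E"
    and allst: "\<And>s t. s \<in> {s1,s2} \<Longrightarrow> t \<in> {t1,t2} \<Longrightarrow> {s,t} \<in> E"
  shows "\<exists>col. (\<forall>e\<in>EK (compo r). col e < (22::nat)) \<and> (\<forall>e\<in>EK (compo r). \<forall>f\<in>EK (compo r). conf e f \<longrightarrow> col e \<noteq> col f)"
proof -
  have ne: "a \<noteq> b" "b \<noteq> c" "c \<noteq> d" "d \<noteq> a" using cyc adjD(1) by blast+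
  have ac: "{a,c} \<notin> E" using tf[of a b c] cyc by auto
  have bdE: "{b,d} \<notin> E" using tf[of a b d] cyc by (auto simp: insert_commute)
  have pE: "{a,p1} \<in> E" "{a,p2} \<in> E" using nba(1) by (auto simp: nb_def)
  have qE: "{c,q1} \<in> E" "{c,q2} \<in> E" using nbc(1) by (auto simp: nb_def)
  have sE: "{b,s1} \<in> E" "{b,s2} \<in> E" using nbb(1) by (auto simp: nb_def)
  have tE: "{d,t1} \<in> E" "{d,t2} \<in> E" using nbd(1) by (auto simp: nb_def)
  have sfact: "{b,x} \<in> E \<and> x \<noteq> a \<and> x \<noteq> c \<and> x \<noteq> d \<and> {d,x} \<notin> E \<and> x \<noteq> p1 \<and> x \<noteq> p2 \<and> x \<noteq> q1 \<and> x \<noteq> q2"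
    if "x \<in> {s1,s2}" for x
  proof -
    have xb: "{b,x} \<in> E" using that sE by auto
    have "x \<noteq> a \<and> x \<noteq> c" using that nbb(2) by auto
    moreover have "x \<noteq> d" using xb bdE by auto
    moreover have "{d,x} \<notin> E" using that nos by auto
    moreover have "x \<noteq> p1" "x \<noteq> p2" using tf[of a b x] cyc xb pE by auto
    moreover have "x \<noteq> q1" "x \<noteq> q2" using tf[of b c x] cyc xb qE by (auto simp: insert_commute)
    ultimately show ?thesis using xb by blast
  qed
  have bt: "{b,x} \<notin> E" if "x \<in> {t1,t2}" for x
  proof
    assume h: "{b,x} \<in> E"
    then have "x \<in> nb b" by (simp add: nb_def)
    then have "x = s1 \<or> x = s2" using nbb nbd that by auto
    then show False using h nos tE that by (auto simp: insert_commute)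
  qed
  have tfact: "{d,x} \<in> E \<and> x \<noteq> a \<and> x \<noteq> c \<and> x \<noteq> b \<and> {b,x} \<notin> E \<and> x \<noteq> p1 \<and> x \<noteq> p2 \<and> x \<noteq> q1 \<and> x \<noteq> q2"
    if "x \<in> {t1,t2}" for x
  proof -
    have xd: "{d,x} \<in> E" using that tE by auto
    have "x \<noteq> a \<and> x \<noteq> c" using that nbd(2) by auto
    moreover have "x \<noteq> b" using xd bdE by (auto simp: insert_commute)
    moreover have "{b,x} \<notin> E" using bt that by blast
    moreover have "x \<noteq> p1" "x \<noteq> p2" using tf[of a d x] cyc xd pE by (auto simp: insert_commute)
    moreover have "x \<noteq> q1" "x \<noteq> q2" using tf[of c d x] cyc xd qE by (auto simp: insert_commute)
    ultimately show ?thesis using xd by blast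
  qed
  have st_ne: "x \<noteq> y" if "x \<in> {s1,s2}" "y \<in> {t1,t2}" for x y
    using sfact[OF that(1)] tfact[OF that(2)] by auto
  have aq: "{a,q1} \<notin> E"
  proof
    assume h: "{a,q1} \<in> E"
    then have "q1 \<in> nb a" by (simp add: nb_def)
    then have "q1 = p1 \<or> q1 = p2" using nba nbc by auto
    then show False using nop qE by auto
  qed
  have p1q1: "p1 \<noteq> q1" using nop(1) qE(1) by auto
  have p1c: "p1 \<noteq> c" using pE ac by auto
  have q1a: "q1 \<noteq> a" using qE ac by (auto simp: insert_commute)
  have p1b: "p1 \<noteq> b" "p1 \<noteq> d" using nba(2) by auto
  have q1b: "q1 \<noteq> b" "q1 \<noteq> d" using nbc(2) by auto
  have "a \<in> nb p1" "q1 \<in> nb p1" "q2 \<in> nb p1" using pE allpq by (auto simp: nb_def insert_commute)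
  moreover have "distinct [a,q1,q2]"
  proof -
    have "a \<noteq> q2" using qE ac by (auto simp: insert_commute)
    then show ?thesis using q1a nbc(2) by auto
  qed
  ultimately obtain o1 where np1: "nb p1 = {a,q1,q2,o1}" using nb_ext3 by blast
  have "c \<in> nb q1" "p1 \<in> nb q1" "p2 \<in> nb q1" using qE allpq by (auto simp: nb_def insert_commute)
  moreover have "distinct [c,p1,p2]"
  proof -
    have "c \<noteq> p2" using pE ac by auto
    then show ?thesis using p1c nba(2) by auto
  qed
  ultimately obtain o2 where nq1: "nb q1 = {c,p1,p2,o2}" using nb_ext3 by blast
  define X where "X = {s1,s2,t1,t2}"
  have Xcases: "x \<in> {s1,s2} \<or> x \<in> {t1,t2}" if "x \<in> X" for x using that by (auto simp: X_def)
  have notX: "x \<noteq> a \<and> x \<noteq> c \<and> x \<noteq> p1 \<and> x \<noteq> p2 \<and> x \<noteq> q1 \<and> x \<noteq> q2" if "x \<in> X" for x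
  proof (cases "x \<in> {s1,s2}")
    case True show ?thesis using sfact[OF True] by simp
  next
    case False then have "x \<in> {t1,t2}" using Xcases[OF that] by blast
    then show ?thesis using tfact[of x] by simp
  qed
  have dX: "distinct [s1,s2,t1,t2]"
    using nbb(2) nbd(2) st_ne[of s1 t1] st_ne[of s1 t2] st_ne[of s2 t1] st_ne[of s2 t2] by auto
  have aP: "x = y" if "x \<in> X" "y \<in> X" "{p1,x} \<in> E" "{p1,y} \<in> E" for x y
  proof (rule forced[OF np1])
    show "x \<in> nb p1" "y \<in> nb p1" using that by (simp_all add: nb_def)
    show "x \<notin> {a,q1,q2}" using notX[OF that(1)] by simp
    show "y \<notin> {a,q1,q2}" using notX[OF that(2)] by simp
  qed
  have aQ: "x = y" if "x \<in> X" "y \<in> X" "{q1,x} \<in> E" "{q1,y} \<in> E" for x y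
  proof (rule forced[OF nq1])
    show "x \<in> nb q1" "y \<in> nb q1" using that by (simp_all add: nb_def)
    show "x \<notin> {c,p1,p2}" using notX[OF that(1)] by simp
    show "y \<notin> {c,p1,p2}" using notX[OF that(2)] by simp
  qed
  have aPQ: False if "x \<in> X" "{p1,x} \<in> E" "{q1,x} \<in> E" for x
  proof (cases "x \<in> {s1,s2}")
    case True
    have "b \<in> nb x" "t1 \<in> nb x" "t2 \<in> nb x"
      using sE allst True by (auto simp: nb_def insert_commute)
    moreover have "distinct [b,t1,t2]" using tfact[of t1] tfact[of t2] nbd(2) by auto
    ultimately obtain o3 where nx: "nb x = {b,t1,t2,o3}" using nb_ext3 by blast
    have "p1 = q1"
    proof (rule forced[OF nx])
      show "p1 \<in> nb x" "q1 \<in> nb x" using that by (simp_all add: nb_def insert_commute)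
      show "p1 \<notin> {b,t1,t2}" using p1b tfact[of t1] tfact[of t2] by auto
      show "q1 \<notin> {b,t1,t2}" using q1b tfact[of t1] tfact[of t2] by auto
    qed
    then show False using p1q1 by simp
  next
    case False
    then have xt: "x \<in> {t1,t2}" using Xcases[OF that(1)] by blast
    have "d \<in> nb x" "s1 \<in> nb x" "s2 \<in> nb x"
      using tE allst xt by (auto simp: nb_def insert_commute)
    moreover have "distinct [d,s1,s2]" using sfact[of s1] sfact[of s2] nbb(2) by auto
    ultimately obtain o3 where nx: "nb x = {d,s1,s2,o3}" using nb_ext3 by blast
    have "p1 = q1"
    proof (rule forced[OF nx])
      show "p1 \<in> nb x" "q1 \<in> nb x" using that by (simp_all add: nb_def insert_commute)
      show "p1 \<notin> {d,s1,s2}" using p1b sfact[of s1] sfact[of s2] by auto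
      show "q1 \<notin> {d,s1,s2}" using q1b sfact[of s1] sfact[of s2] by auto
    qed
    then show False using p1q1 by simp
  qed
  have ex: "\<exists>s s' t t'. ((s = s1 \<and> s' = s2) \<or> (s = s2 \<and> s' = s1)) \<and> ((t = t1 \<and> t' = t2) \<or> (t = t2 \<and> t' = t1))
     \<and> \<not> {p1,s} \<in> E \<and> \<not> {p1,t} \<in> E \<and> \<not> {q1,s'} \<in> E \<and> \<not> {q1,t'} \<in> E"
  proof (rule choose4[OF dX])
    fix x y assume "x \<in> {s1,s2,t1,t2}" "y \<in> {s1,s2,t1,t2}" "{p1,x} \<in> E" "{p1,y} \<in> E"
    then show "x = y" using aP[of x y] unfolding X_def by blast
  next
    fix x y assume "x \<in> {s1,s2,t1,t2}" "y \<in> {s1,s2,t1,t2}" "{q1,x} \<in> E" "{q1,y} \<in> E"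
    then show "x = y" using aQ[of x y] unfolding X_def by blast
  next
    fix x assume "x \<in> {s1,s2,t1,t2}" "{p1,x} \<in> E" "{q1,x} \<in> E"
    then show False using aPQ[of x] unfolding X_def by blast
  qed
  then obtain s s' t t' where ch: "(s = s1 \<and> s' = s2) \<or> (s = s2 \<and> s' = s1)" "(t = t1 \<and> t' = t2) \<or> (t = t2 \<and> t' = t1)"
    "{p1,s} \<notin> E" "{p1,t} \<notin> E" "{q1,s'} \<notin> E" "{q1,t'} \<notin> E"
    by blast
  have sin: "s \<in> {s1,s2}" "s' \<in> {s1,s2}" "s \<noteq> s'" using ch(1) nbb(2) by auto
  have tin: "t \<in> {t1,t2}" "t' \<in> {t1,t2}" "t \<noteq> t'" using ch(2) nbd(2) by auto
  have sA: "{b,s} \<in> E" "s \<noteq> a" "s \<noteq> c" "s \<noteq> p1" "s \<noteq> q1" using sfact[OF sin(1)] by simp_all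
  have sA': "{b,s'} \<in> E" "s' \<noteq> a" "s' \<noteq> c" "s' \<noteq> p1" "s' \<noteq> q1" using sfact[OF sin(2)] by simp_all
  have tA: "{d,t} \<in> E" "t \<noteq> a" "t \<noteq> c" "t \<noteq> p1" "t \<noteq> q1" using tfact[OF tin(1)] by simp_all
  have tA': "{d,t'} \<in> E" "t' \<noteq> a" "t' \<noteq> c" "t' \<noteq> p1" "t' \<noteq> q1" using tfact[OF tin(2)] by simp_all
  have stE: "{s,t} \<in> E" "{s',t'} \<in> E" using allst[OF sin(1) tin(1)] allst[OF sin(2) tin(2)] by simp_all
  have N1: "{a,p1} \<in> Nc {a,b} \<and> {a,p1} \<in> Nc {b,c} \<and> {a,p1} \<in> Nc {c,d} \<and> {a,p1} \<in> Nc {d,a}"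
    using pend4(1)[OF cyc pE(1) p1b] .
  have N2: "{c,q1} \<in> Nc {a,b} \<and> {c,q1} \<in> Nc {b,c} \<and> {c,q1} \<in> Nc {c,d} \<and> {c,q1} \<in> Nc {d,a}"
    using pend4(3)[OF cyc qE(1) q1b(2) q1b(1)] .
  have N3: "{s,t} \<in> Nc {a,b}" "{s,t} \<in> Nc {b,c}" "{s,t} \<in> Nc {c,d}" "{s,t} \<in> Nc {d,a}"
    using crossNc[OF cyc sA(1) tA(1) stE(1) sA(2,3) tA(2,3)] by simp_all
  have N4: "{s',t'} \<in> Nc {a,b}" "{s',t'} \<in> Nc {b,c}" "{s',t'} \<in> Nc {c,d}" "{s',t'} \<in> Nc {d,a}"
    using crossNc[OF cyc sA'(1) tA'(1) stE(2) sA'(2,3) tA'(2,3)] by simp_all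
  have n1: "\<not> conf {a,p1} {s,t}" "{a,p1} \<inter> {s,t} = {}"
    using pendcross[OF cyc pE(1) p1b sA(1) tA(1) sA(2,3) tA(2,3) ch(3,4)] by simp_all
  have cyc2: "{c,d} \<in> E" "{d,a} \<in> E" "{a,b} \<in> E" "{b,c} \<in> E" "c \<noteq> a" "d \<noteq> b" using cyc by auto
  have nq1: "{q1,t'} \<notin> E" "{q1,s'} \<notin> E" using ch(5,6) by simp_all
  have n2: "\<not> conf {c,q1} {t',s'}" "{c,q1} \<inter> {t',s'} = {}"
    using pendcross[OF cyc2 qE(1) q1b(2) q1b(1) tA'(1) sA'(1) tA'(3) tA'(2) sA'(3) sA'(2) nq1] by simp_all
  have n2': "\<not> conf {c,q1} {s',t'}" "{c,q1} \<inter> {s',t'} = {}" using n2 by (simp_all add: insert_commute)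
  have x1: "s \<noteq> t'" "t \<noteq> s'" using st_ne[OF sin(1) tin(2)] st_ne[OF sin(2) tin(1)] by auto
  have dj: "{a,p1} \<inter> {c,q1} = {}" "{a,p1} \<inter> {s',t'} = {}" "{s,t} \<inter> {c,q1} = {}" "{s,t} \<inter> {s',t'} = {}"
    using cyc(5) q1a p1c p1q1 sA sA' tA tA' sin(3) tin(3) x1 by auto
  show ?thesis
    by (rule cycFW2[OF rV aK cyc, of "{a,p1}" "{s,t}" "{c,q1}" "{s',t'}"])
       (use N1 N2 N3 N4 n1 n2' dj in simp_all)
qed

lemma caseA:
  assumes rV: "r \<in> V" and aK: "a \<in> compo r"
    and cyc: "{a,b} \<in> E" "{b,c} \<in> E" "{c,d} \<in> E" "{d,a} \<in> E" "a \<noteq> c" "b \<noteq> d"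
  shows "\<exists>col. (\<forall>e\<in>EK (compo r). col e < (22::nat)) \<and> (\<forall>e\<in>EK (compo r). \<forall>f\<in>EK (compo r). conf e f \<longrightarrow> col e \<noteq> col f)"
proof -
  have ne: "a \<noteq> b" "b \<noteq> c" "c \<noteq> d" "d \<noteq> a" using cyc adjD(1) by blast+
  have bK: "b \<in> compo r" using comp_cl[OF aK cyc(1)] .
  have cyc2: "{b,c} \<in> E" "{c,d} \<in> E" "{d,a} \<in> E" "{a,b} \<in> E" "b \<noteq> d" "c \<noteq> a" using cyc by auto
  have "b \<in> nb a" "d \<in> nb a" using cyc by (auto simp: nb_def insert_commute)
  then obtain p1 p2 where nba: "nb a = {b,d,p1,p2}" "distinct [b,d,p1,p2]" using nb_ext2 cyc(6) by blast
  have "b \<in> nb c" "d \<in> nb c" using cyc by (auto simp: nb_def insert_commute)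
  then obtain q1 q2 where nbc: "nb c = {b,d,q1,q2}" "distinct [b,d,q1,q2]" using nb_ext2 cyc(6) by blast
  have "a \<in> nb b" "c \<in> nb b" using cyc by (auto simp: nb_def insert_commute)
  then obtain s1 s2 where nbb: "nb b = {a,c,s1,s2}" "distinct [a,c,s1,s2]" using nb_ext2 cyc(5) by blast
  have "a \<in> nb d" "c \<in> nb d" using cyc by (auto simp: nb_def insert_commute)
  then obtain t1 t2 where nbd: "nb d = {a,c,t1,t2}" "distinct [a,c,t1,t2]" using nb_ext2 cyc(5) by blast
  have pE: "{a,p1} \<in> E" "{a,p2} \<in> E" using nba(1) by (auto simp: nb_def)
  have qE: "{c,q1} \<in> E" "{c,q2} \<in> E" using nbc(1) by (auto simp: nb_def)
  have sE: "{b,s1} \<in> E" "{b,s2} \<in> E" using nbb(1) by (auto simp: nb_def)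
  have tE: "{d,t1} \<in> E" "{d,t2} \<in> E" using nbd(1) by (auto simp: nb_def)
  have pn: "p1 \<noteq> b" "p1 \<noteq> d" "p2 \<noteq> b" "p2 \<noteq> d" using nba(2) by auto
  have qn: "q1 \<noteq> b" "q1 \<noteq> d" "q2 \<noteq> b" "q2 \<noteq> d" using nbc(2) by auto
  have sn: "s1 \<noteq> a" "s1 \<noteq> c" "s2 \<noteq> a" "s2 \<noteq> c" using nbb(2) by auto
  have tn: "t1 \<noteq> a" "t1 \<noteq> c" "t2 \<noteq> a" "t2 \<noteq> c" using nbd(2) by auto
  show ?thesis
  proof (cases "\<exists>z\<in>{p1,p2}. {c,z} \<in> E")
    case Pany: True
    then obtain z where z: "z \<in> {p1,p2}" "{c,z} \<in> E" by blast
    have zf: "{a,z} \<in> E" "z \<noteq> b" "z \<noteq> d" using z(1) pE pn by auto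
    show ?thesis
    proof (cases "\<exists>w\<in>{s1,s2}. {d,w} \<in> E")
      case True
      then obtain w where w: "w \<in> {s1,s2}" "{d,w} \<in> E" by blast
      have wf: "{b,w} \<in> E" "w \<noteq> a" "w \<noteq> c" using w(1) sE sn by auto
      show ?thesis by (rule caseI_b[OF rV aK cyc zf(1) z(2) zf(2,3) wf(1) w(2) wf(2,3)])
    next
      case False
      then have nos: "{d,s1} \<notin> E" "{d,s2} \<notin> E" by auto
      show ?thesis by (rule caseII[OF rV aK cyc zf(1) z(2) zf(2,3) pE(1) pn(1,2) nbb nbd nos])
    qed
  next
    case nP: False
    then have nop: "{c,p1} \<notin> E" "{c,p2} \<notin> E" by auto
    have noq: "{a,q1} \<notin> E" "{a,q2} \<notin> E"
    proof -
      show "{a,q1} \<notin> E"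
      proof
        assume "{a,q1} \<in> E" then have "q1 \<in> nb a" by (simp add: nb_def)
        then have "q1 = p1 \<or> q1 = p2" using nba nbc by auto
        then show False using nop qE by auto
      qed
      show "{a,q2} \<notin> E"
      proof
        assume "{a,q2} \<in> E" then have "q2 \<in> nb a" by (simp add: nb_def)
        then have "q2 = p1 \<or> q2 = p2" using nba nbc by auto
        then show False using nop qE by auto
      qed
    qed
    show ?thesis
    proof (cases "\<exists>w\<in>{s1,s2}. {d,w} \<in> E")
      case True
      then obtain w where w: "w \<in> {s1,s2}" "{d,w} \<in> E" by blast
      have wf: "{b,w} \<in> E" "w \<noteq> c" "w \<noteq> a" using w(1) sE sn by auto
      have nbc': "nb c = {b,d,q1,q2}" "distinct [b,d,q1,q2]" using nbc by auto
      show ?thesis by (rule caseII[OF rV bK cyc2 wf(1) w(2) wf(2,3) sE(1) sn(2) sn(1) nbc' nba noq])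
    next
      case False
      then have nos: "{d,s1} \<notin> E" "{d,s2} \<notin> E" by auto
      have not: "{b,t1} \<notin> E" "{b,t2} \<notin> E"
      proof -
        show "{b,t1} \<notin> E"
        proof
          assume "{b,t1} \<in> E" then have "t1 \<in> nb b" by (simp add: nb_def)
          then have "t1 = s1 \<or> t1 = s2" using nbb nbd by auto
          then show False using nos tE by (auto simp: insert_commute)
        qed
        show "{b,t2} \<notin> E"
        proof
          assume "{b,t2} \<in> E" then have "t2 \<in> nb b" by (simp add: nb_def)
          then have "t2 = s1 \<or> t2 = s2" using nbb nbd by auto
          then show False using nos tE by (auto simp: insert_commute)
        qed
      qed
      show ?thesis
      proof (cases "\<exists>p\<in>{p1,p2}. \<exists>q\<in>{q1,q2}. {p,q} \<notin> E")
        case X: True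
        then obtain p q where pq: "p \<in> {p1,p2}" "q \<in> {q1,q2}" "{p,q} \<notin> E" by blast
        have pf: "{a,p} \<in> E" "p \<noteq> b" "p \<noteq> d" "{c,p} \<notin> E" using pq(1) pE pn nop by auto
        have qf: "{c,q} \<in> E" "q \<noteq> b" "q \<noteq> d" "{a,q} \<notin> E" using pq(2) qE qn noq by auto
        show ?thesis
        proof (cases "\<exists>s\<in>{s1,s2}. \<exists>t\<in>{t1,t2}. {s,t} \<notin> E")
          case True
          then obtain s t where st: "s \<in> {s1,s2}" "t \<in> {t1,t2}" "{s,t} \<notin> E" by blast
          have sf: "{b,s} \<in> E" "s \<noteq> c" "s \<noteq> a" "{d,s} \<notin> E" using st(1) sE sn nos by auto
          have tf': "{d,t} \<in> E" "t \<noteq> c" "t \<noteq> a" "{b,t} \<notin> E" using st(2) tE tn not by auto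
          show ?thesis by (rule caseIIIa[OF rV aK cyc pf qf pq(3) sf tf' st(3)])
        next
          case False
          then have allst: "{s,t} \<in> E" if "s \<in> {s1,s2}" "t \<in> {t1,t2}" for s t using that by blast
          show ?thesis by (rule caseIIIb[OF rV aK cyc pf qf pq(3) nbb nbd nos allst])
        qed
      next
        case nX: False
        then have allpq: "{p,q} \<in> E" if "p \<in> {p1,p2}" "q \<in> {q1,q2}" for p q using that by blast
        show ?thesis
        proof (cases "\<exists>s\<in>{s1,s2}. \<exists>t\<in>{t1,t2}. {s,t} \<notin> E")
          case True
          then obtain s t where st: "s \<in> {s1,s2}" "t \<in> {t1,t2}" "{s,t} \<notin> E" by blast
          have sf: "{b,s} \<in> E" "s \<noteq> c" "s \<noteq> a" "{d,s} \<notin> E" using st(1) sE sn nos by auto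
          have tf': "{d,t} \<in> E" "t \<noteq> c" "t \<noteq> a" "{b,t} \<notin> E" using st(2) tE tn not by auto
          have allqp: "{x,y} \<in> E" if "x \<in> {q1,q2}" "y \<in> {p1,p2}" for x y
            using allpq[OF that(2) that(1)] by (simp add: insert_commute)
          show ?thesis by (rule caseIIIb[OF rV bK cyc2 sf tf' st(3) nbc nba noq allqp])
        next
          case False
          then have allst: "{s,t} \<in> E" if "s \<in> {s1,s2}" "t \<in> {t1,t2}" for s t using that by blast
          show ?thesis by (rule caseIIId[OF rV aK cyc nba nbc nbb nbd nop nos allpq allst])
        qed
      qed
    qed
  qed
qed

lemma comp_color:
  assumes rV: "r \<in> V"
  shows "\<exists>c. (\<forall>e\<in>EK (compo r). c e < (22::nat)) \<and> (\<forall>e\<in>EK (compo r). \<forall>f\<in>EK (compo r). conf e f \<longrightarrow> c e \<noteq> c f)"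
proof (cases "\<exists>a b c d. a \<in> compo r \<and> {a,b} \<in> E \<and> {b,c} \<in> E \<and> {c,d} \<in> E \<and> {d,a} \<in> E \<and> a \<noteq> c \<and> b \<noteq> d")
  case True
  then obtain a b c d where h: "a \<in> compo r" "{a,b} \<in> E" "{b,c} \<in> E" "{c,d} \<in> E" "{d,a} \<in> E" "a \<noteq> c" "b \<noteq> d"
    by blast
  show ?thesis by (rule caseA[OF rV h])
next
  case False
  show ?thesis
  proof (rule caseB[OF rV])
    fix x y w w' assume h: "x \<in> compo r" "x \<noteq> y" "{x,w} \<in> E" "{y,w} \<in> E" "{x,w'} \<in> E" "{y,w'} \<in> E"
    show "w = w'"
    proof (rule ccontr)
      assume "w \<noteq> w'"
      moreover have "{w,y} \<in> E" "{w',x} \<in> E" using h by (simp_all add: insert_commute)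
      ultimately show False using False h by blast
    qed
  qed
qed

end
context G4 begin

lemma closed_color:
  assumes "K0 \<subseteq> V" "\<And>v w. v \<in> K0 \<Longrightarrow> {v,w} \<in> E \<Longrightarrow> w \<in> K0"
  shows "\<exists>c. (\<forall>e\<in>EK K0. c e < (22::nat)) \<and> (\<forall>e\<in>EK K0. \<forall>f\<in>EK K0. conf e f \<longrightarrow> c e \<noteq> c f)"
  using assms
proof (induction "card K0" arbitrary: K0 rule: less_induct)
  case less
  show ?case
  proof (cases "K0 = {}")
    case True
    have "EK K0 = {}"
    proof -
      have "e = {}" if "e \<in> E" "e \<subseteq> {}" for e using that by auto
      moreover have "{} \<notin> E" using edgeD by fastforce
      ultimately show ?thesis using True by (auto simp: EK_def)
    qed
    then show ?thesis by auto
  next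
    case False
    then obtain r where r: "r \<in> K0" by blast
    have rV: "r \<in> V" using r less.prems by auto
    define K where "K = compo r"
    have KK0: "K \<subseteq> K0"
    proof
      fix v assume "v \<in> K"
      then have "(r,v) \<in> Adj\<^sup>*" by (simp add: K_def compo_def)
      then show "v \<in> K0"
      proof (induction rule: rtrancl_induct)
        case base then show ?case using r by simp
      next
        case (step y z) then show ?case using less.prems(2) by (auto simp: Adj_def)
      qed
    qed
    define K1 where "K1 = K0 - K"
    have K1cl: "w \<in> K1" if "v \<in> K1" "{v,w} \<in> E" for v w
    proof -
      have "w \<in> K0" using that less.prems(2) by (auto simp: K1_def)
      moreover have "w \<notin> K"
      proof
        assume "w \<in> K"
        moreover have "{w,v} \<in> E" using that(2) by (simp add: insert_commute)
        ultimately have "v \<in> K" using comp_cl by (simp add: K_def)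
        then show False using that(1) by (simp add: K1_def)
      qed
      ultimately show ?thesis by (simp add: K1_def)
    qed
    have finK0: "finite K0" using less.prems(1) finV finite_subset by blast
    have rK: "r \<in> K" using comp_self by (simp add: K_def)
    have "K1 \<subset> K0" unfolding K1_def using r rK by blast
    then have lt: "card K1 < card K0" using finK0 psubset_card_mono by blast
    have K1V: "K1 \<subseteq> V" using less.prems(1) by (auto simp: K1_def)
    obtain c2 where c2: "\<forall>e\<in>EK K1. c2 e < (22::nat)" "\<forall>e\<in>EK K1. \<forall>f\<in>EK K1. conf e f \<longrightarrow> c2 e \<noteq> c2 f"
    proof -
      have "\<exists>c. (\<forall>e\<in>EK K1. c e < (22::nat)) \<and> (\<forall>e\<in>EK K1. \<forall>f\<in>EK K1. conf e f \<longrightarrow> c e \<noteq> c f)"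
        by (rule less.hyps[OF lt K1V]) (rule K1cl)
      then show ?thesis using that by blast
    qed
    obtain c1 where c1: "\<forall>e\<in>EK K. c1 e < (22::nat)" "\<forall>e\<in>EK K. \<forall>f\<in>EK K. conf e f \<longrightarrow> c1 e \<noteq> c1 f"
      using comp_color[OF rV] unfolding K_def by blast
    have Kcl: "w \<in> K" if "v \<in> K" "{v,w} \<in> E" for v w using that comp_cl unfolding K_def by blast
    have split: "e \<in> EK K \<or> e \<in> EK K1" if "e \<in> EK K0" for e
    proof -
      have eE: "e \<in> E" "e \<subseteq> K0" using that by (auto simp: EK_def)
      obtain a b where ab: "e = {a,b}" using edgeD eE by blast
      have ab1: "{a,b} \<in> E" "{b,a} \<in> E" using eE ab by (auto simp: insert_commute)
      have "a \<in> K \<longleftrightarrow> b \<in> K" using Kcl[OF _ ab1(1)] Kcl[OF _ ab1(2)] by blast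
      then have "e \<subseteq> K \<or> e \<subseteq> K1" using eE(2) ab unfolding K1_def by blast
      then show ?thesis using eE(1) unfolding EK_def by blast
    qed
    have cross: "f \<in> EK K" if "e \<in> EK K" "f \<in> E" "conf e f" for e f
    proof -
      have "f \<in> Nc e" using that by (simp add: Nc_def)
      moreover have "Nc e \<subseteq> EK K"
      proof (rule Nc_EK)
        fix v w assume "v \<in> K" "{v,w} \<in> E" then show "w \<in> K" by (rule Kcl)
      next
        show "e \<in> EK K" by (rule that(1))
      qed
      ultimately show ?thesis by blast
    qed
    show ?thesis
    proof (intro exI[of _ "\<lambda>e. if e \<in> EK K then c1 e else c2 e"] conjI ballI impI)
      fix e assume "e \<in> EK K0"
      then show "(if e \<in> EK K then c1 e else c2 e) < 22" using split[of e] c1 c2 by auto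
    next
      fix e f assume ef: "e \<in> EK K0" "f \<in> EK K0" "conf e f"
      have fE: "f \<in> E" "e \<in> E" using ef by (auto simp: EK_def)
      show "(if e \<in> EK K then c1 e else c2 e) \<noteq> (if f \<in> EK K then c1 f else c2 f)"
      proof (cases "e \<in> EK K")
        case True
        then have "f \<in> EK K" using cross fE ef by blast
        then show ?thesis using True c1 ef(3) by simp
      next
        case False
        then have e1: "e \<in> EK K1" using split ef by blast
        have "f \<notin> EK K" using cross[of f e] fE ef(3) conf_sym False by blast
        then have "f \<in> EK K1" using split ef by blast
        then show ?thesis using e1 False \<open>f \<notin> EK K\<close> c2 ef(3) by simp
      qed
    qed
  qed
qed

end

lemma girth4_tf:
  assumes "simple_graph V E" "girth V E = 4" "{x,y} \<in> E" "{y,z} \<in> E" "{x,z} \<in> E"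
  shows False
proof -
  have ex: "\<exists>k. has_cycle V E k" using assms(2) by (auto simp: girth_def split: if_splits)
  then have "enat (LEAST k. has_cycle V E k) = enat 4" using assms(2) by (simp add: girth_def numeral_eq_enat)
  then have "(LEAST k. has_cycle V E k) = 4" by simp
  moreover have "has_cycle V E 3"
  proof -
    have c: "card {x,y} = 2" "card {y,z} = 2" "card {x,z} = 2" "{x,y} \<subseteq> V" "{x,z} \<subseteq> V"
      using assms(1,3,4,5) by (auto simp: simple_graph_def)
    then have d: "x \<noteq> y" "y \<noteq> z" "x \<noteq> z" by (auto split: if_splits)
    have "\<forall>i<3. {[x,y,z] ! i, [x,y,z] ! ((i + 1) mod 3)} \<in> E"
    proof (intro allI impI)
      fix i :: nat assume "i < 3"
      then have "i = 0 \<or> i = 1 \<or> i = 2" by auto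
      then show "{[x,y,z] ! i, [x,y,z] ! ((i + 1) mod 3)} \<in> E"
        using assms(3,4,5) by (auto simp: insert_commute)
    qed
    then show ?thesis unfolding has_cycle_def using d c
      by (intro conjI exI[of _ "[x,y,z]"]) auto
  qed
  ultimately have "(4::nat) \<le> 3" by (metis Least_le)
  then show False by simp
qed

theorem lemma6:
  fixes V :: "'a set" and E :: "'a set set"
  assumes "simple_graph V E"
    and "regular V E 4"
    and "girth V E = 4"
  shows "\<exists>c :: 'a set \<Rightarrow> nat. strong_edge_coloring E c \<and> card (c ` E) \<le> 22"
proof -
  interpret G4 V E
  proof
    show "simple_graph V E" by (rule assms(1))
    show "regular V E 4" by (rule assms(2))
    fix x y z assume "{x,y} \<in> E" "{y,z} \<in> E" "{x,z} \<in> E"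
    then show False by (rule girth4_tf[OF assms(1) assms(3)])
  qed
  obtain c where c: "\<forall>e\<in>EK V. c e < (22::nat)" "\<forall>e\<in>EK V. \<forall>f\<in>EK V. conf e f \<longrightarrow> c e \<noteq> c f"
  proof -
    have "\<exists>c. (\<forall>e\<in>EK V. c e < (22::nat)) \<and> (\<forall>e\<in>EK V. \<forall>f\<in>EK V. conf e f \<longrightarrow> c e \<noteq> c f)"
    proof (rule closed_color)
      fix v w assume "v \<in> V" "{v,w} \<in> E" then show "w \<in> V" using adjD(3) by blast
    qed simp
    then show ?thesis using that by blast
  qed
  have EKV: "EK V = E" using assms(1) by (auto simp: EK_def simple_graph_def)
  have "strong_edge_coloring E c"
    using c EKV unfolding strong_edge_coloring_def conf_def by auto
  moreover have "c ` E \<subseteq> {0..<22}" using c EKV by auto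
  then have "card (c ` E) \<le> 22" by (metis card_atLeastLessThan card_mono diff_zero finite_atLeastLessThan)
  ultimately show ?thesis by blast
qed

end
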